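(* Let $I\subset\mathbb{R}$ be an open interval and let $\gamma : I \to \mathbb{S}^3_1$ be a smooth null curve in de Sitter 3-space without flex points. Then there exist a frame field $\Gamma : I \to \mathrm{SL}(2,\mathbb{C})$ along $\gamma$ (i.e. $\gamma(t)=\Gamma(t)J\Gamma(t)^{\ast}$ for all $t\in I$), a sign $\varepsilon\in\{1,-1\}$, a nowhere vanishing real 1-form $\omega$ on $I$ and a smooth function $k : I\to\mathbb{R}$ such that \[ \Gamma^{-1}d\Gamma = \begin{pmatrix} 0 & \varepsilon\\ k+i & 0\end{pmatrix}\omega . \] Such a frame field is called a canonical frame along $\gamma$ (with $\omega$ the canonical pseudo-arc element and $k$ the curvature of $\gamma$). Moreover, if $\Gamma$ is a canonical frame field along $\gamma$, then any other canonical frame field along $\gamma$ is $\pm\Gamma$.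
   Context: $\mathrm{Herm}(2)$ is the real 4-dimensional space of $2\times2$ complex Hermitian matrices with the Lorentz metric given by the quadratic form $\langle X,X\rangle=-\det X$. De Sitter 3-space is $\mathbb{S}^3_1=\{X\in\mathrm{Herm}(2): \det X=-1\}$ with the induced Lorentz metric $g$. The group $\mathrm{SL}(2,\mathbb{C})$ acts transitively by isometries via $A\cdot X=AXA^{\ast}$ ($A^\ast$ the conjugate transpose); the stabilizer of $J=\begin{pmatrix}0&-i\\ i&0\end{pmatrix}$ is $\mathrm{SL}(2,\mathbb{R})$, and $\pi(A)=AJA^{\ast}$ is the projection $\mathrm{SL}(2,\mathbb{C})\to\mathbb{S}^3_1$. A frame field along a curve $\gamma:I\to\mathbb{S}^3_1$ is a smooth map $\Gamma:I\to\mathrm{SL}(2,\mathbb{C})$ with $\pi\circ\Gamma=\gamma$. A smooth curve $\gamma$ is null if $g(\gamma'(t),\gamma'(t))=0$ for all $t$, and it has no flex points if $\gamma'(t)$ and $\gamma''(t)$ are linearly independent for all $t$, where $\gamma''$ is the covariant derivative (Levi-Civita connection of $g$) of $\gamma'$ along $\gamma$. *)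

theory Defs
  imports "HOL-Analysis.Analysis"
begin

type_synonym cmat2 = "complex^2^2"

definition mat2 :: "complex \<Rightarrow> complex \<Rightarrow> complex \<Rightarrow> complex \<Rightarrow> cmat2" where
  "mat2 a b c d = (\<chi> i j. if i = 1 then (if j = 1 then a else b) else (if j = 1 then c else d))"

definition adj :: "cmat2 \<Rightarrow> cmat2" where
  "adj X = (\<chi> i j. cnj (X $ j $ i))"

definition hermitian :: "cmat2 \<Rightarrow> bool" where
  "hermitian X \<longleftrightarrow> adj X = X"

text \<open>The Lorentz inner product on Herm(2): polarization of the quadratic form -det X.\<close>
definition lor :: "cmat2 \<Rightarrow> cmat2 \<Rightarrow> real" where
  "lor X Y = - Re (det (X + Y) - det X - det Y) / 2"

definition J_mat :: cmat2 where
  "J_mat = mat2 0 (- \<i>) \<i> 0"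

definition deSitter :: "cmat2 set" where
  "deSitter = {X. hermitian X \<and> det X = -1}"

definition SL2C :: "cmat2 set" where
  "SL2C = {A. det A = 1}"

definition smooth_on :: "real set \<Rightarrow> (real \<Rightarrow> 'a::real_normed_vector) \<Rightarrow> bool" where
  "smooth_on S f \<longleftrightarrow> (\<exists>D. D 0 = f \<and> (\<forall>n. \<forall>t\<in>S. (D n has_vector_derivative D (Suc n) t) (at t)))"

text \<open>Levi-Civita covariant derivative along a curve in de Sitter space (embedded in Herm(2),
  with \<langle>X,X\<rangle> = 1 on it): tangential projection of the ambient second derivative.\<close>
definition cov_acc :: "(real \<Rightarrow> cmat2) \<Rightarrow> real \<Rightarrow> cmat2" where
  "cov_acc \<gamma> t = (let a = vector_derivative (\<lambda>s. vector_derivative \<gamma> (at s)) (at t)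
                   in a - lor a (\<gamma> t) *\<^sub>R \<gamma> t)"

definition open_interval :: "real set \<Rightarrow> bool" where
  "open_interval I \<longleftrightarrow> is_interval I \<and> open I \<and> I \<noteq> {}"

definition null_curve_no_flex :: "real set \<Rightarrow> (real \<Rightarrow> cmat2) \<Rightarrow> bool" where
  "null_curve_no_flex I \<gamma> \<longleftrightarrow>
     smooth_on I \<gamma> \<and> (\<forall>t\<in>I. \<gamma> t \<in> deSitter) \<and>
     (\<forall>t\<in>I. lor (vector_derivative \<gamma> (at t)) (vector_derivative \<gamma> (at t)) = 0) \<and>
     (\<forall>t\<in>I. \<forall>a b::real. a *\<^sub>R vector_derivative \<gamma> (at t) + b *\<^sub>R cov_acc \<gamma> t = 0
                        \<longrightarrow> a = 0 \<and> b = 0)"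

definition frame_field :: "real set \<Rightarrow> (real \<Rightarrow> cmat2) \<Rightarrow> (real \<Rightarrow> cmat2) \<Rightarrow> bool" where
  "frame_field I \<gamma> \<Gamma> \<longleftrightarrow> smooth_on I \<Gamma> \<and> (\<forall>t\<in>I. \<Gamma> t \<in> SL2C) \<and>
     (\<forall>t\<in>I. \<gamma> t = \<Gamma> t ** J_mat ** adj (\<Gamma> t))"

text \<open>Gamma^{-1} dGamma = [[0, eps], [k + i, 0]] omega, with omega = w dt.\<close>
definition canonical_frame_data ::
  "real set \<Rightarrow> (real \<Rightarrow> cmat2) \<Rightarrow> (real \<Rightarrow> cmat2) \<Rightarrow> real \<Rightarrow> (real \<Rightarrow> real) \<Rightarrow> (real \<Rightarrow> real) \<Rightarrow> bool" where
  "canonical_frame_data I \<gamma> \<Gamma> \<epsilon> w k \<longleftrightarrow>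
     frame_field I \<gamma> \<Gamma> \<and> \<epsilon> \<in> {1, -1} \<and>
     smooth_on I w \<and> (\<forall>t\<in>I. w t \<noteq> 0) \<and> smooth_on I k \<and>
     (\<forall>t\<in>I. matrix_inv (\<Gamma> t) ** vector_derivative \<Gamma> (at t)
             = w t *\<^sub>R mat2 0 (complex_of_real \<epsilon>) (complex_of_real (k t) + \<i>) 0)"

definition canonical_frame :: "real set \<Rightarrow> (real \<Rightarrow> cmat2) \<Rightarrow> (real \<Rightarrow> cmat2) \<Rightarrow> bool" where
  "canonical_frame I \<gamma> \<Gamma> \<longleftrightarrow> (\<exists>\<epsilon> w k. canonical_frame_data I \<gamma> \<Gamma> \<epsilon> w k)"

end

theory Submission
  imports Defs
begin


lemma mat2_nth [simp]:
  "mat2 a b c d $ 1 $ 1 = a" "mat2 a b c d $ 1 $ 2 = b"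
  "mat2 a b c d $ 2 $ 1 = c" "mat2 a b c d $ 2 $ 2 = d"
  by (simp_all add: mat2_def)

lemma cmat2_eq_iff: "(A::cmat2) = B \<longleftrightarrow> A$1$1 = B$1$1 \<and> A$1$2 = B$1$2 \<and> A$2$1 = B$2$1 \<and> A$2$2 = B$2$2"
  by (auto simp: vec_eq_iff forall_2)

lemma mat2_eta: "(A::cmat2) = mat2 (A$1$1) (A$1$2) (A$2$1) (A$2$2)"
  by (simp add: cmat2_eq_iff)

lemma mat2_mult: "mat2 a b c d ** mat2 e f g h = mat2 (a*e+b*g) (a*f+b*h) (c*e+d*g) (c*f+d*h)"
  by (simp add: cmat2_eq_iff matrix_matrix_mult_def sum_2)

lemma det_mat2: "det (mat2 a b c d) = a*d - b*c"
  by (simp add: det_2)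

lemma adj_mat2: "adj (mat2 a b c d) = mat2 (cnj a) (cnj c) (cnj b) (cnj d)"
  by (simp add: cmat2_eq_iff adj_def)

lemma mat2_add: "mat2 a b c d + mat2 e f g h = mat2 (a+e) (b+f) (c+g) (d+h)"
  by (simp add: cmat2_eq_iff)
lemma mat2_diff: "mat2 a b c d - mat2 e f g h = mat2 (a-e) (b-f) (c-g) (d-h)"
  by (simp add: cmat2_eq_iff)
lemma mat2_neg: "- mat2 a b c d = mat2 (-a) (-b) (-c) (-d)"
  by (simp add: cmat2_eq_iff)
lemma mat2_scaleR: "r *\<^sub>R mat2 a b c d = mat2 (r*\<^sub>Ra) (r*\<^sub>Rb) (r*\<^sub>Rc) (r*\<^sub>Rd)"
  by (simp add: cmat2_eq_iff)
lemma mat2_zero: "(0::cmat2) = mat2 0 0 0 0"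
  by (simp add: cmat2_eq_iff)
lemma mat2_one: "(mat 1::cmat2) = mat2 1 0 0 1"
  by (simp add: cmat2_eq_iff mat_def)
lemma mat2_eq: "mat2 a b c d = mat2 e f g h \<longleftrightarrow> a = e \<and> b = f \<and> c = g \<and> d = h"
  by (simp add: cmat2_eq_iff)

lemma matrix_inv_mat2:
  assumes "a*d - b*c = 1"
  shows "matrix_inv (mat2 a b c d) = mat2 d (-b) (-c) a"
proof -
  have *: "mat2 a b c d ** mat2 d (-b) (-c) a = mat 1 \<and> mat2 d (-b) (-c) a ** mat2 a b c d = mat 1"
    using assms by (simp add: mat2_mult mat2_one mat2_eq algebra_simps)
  show ?thesis unfolding matrix_inv_def
  proof (rule some_equality)
    fix A' :: cmat2 assume A': "mat2 a b c d ** A' = mat 1 \<and> A' ** mat2 a b c d = mat 1"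
    have "A' = (mat2 d (-b) (-c) a ** mat2 a b c d) ** A'" using * by (simp add: matrix_mul_lid)
    also have "\<dots> = mat2 d (-b) (-c) a" using A' by (simp add: matrix_mul_assoc[symmetric] matrix_mul_rid)
    finally show "A' = mat2 d (-b) (-c) a" .
  qed (use * in auto)
qed


inductive_set alg :: "(real \<Rightarrow> complex) set \<Rightarrow> (real \<Rightarrow> complex) set" for B where
  alg_base: "f \<in> B \<Longrightarrow> f \<in> alg B"
| alg_const: "(\<lambda>_. c) \<in> alg B"
| alg_add: "f \<in> alg B \<Longrightarrow> g \<in> alg B \<Longrightarrow> (\<lambda>t. f t + g t) \<in> alg B"
| alg_mult: "f \<in> alg B \<Longrightarrow> g \<in> alg B \<Longrightarrow> (\<lambda>t. f t * g t) \<in> alg B"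
| alg_cnj: "f \<in> alg B \<Longrightarrow> (\<lambda>t. cnj (f t)) \<in> alg B"

lemma alg_minus: "f \<in> alg B \<Longrightarrow> (\<lambda>t. - f t) \<in> alg B"
  using alg_mult[OF alg_const[of "-1"]] by simp

lemma alg_diff: "f \<in> alg B \<Longrightarrow> g \<in> alg B \<Longrightarrow> (\<lambda>t. f t - g t) \<in> alg B"
  using alg_add[OF _ alg_minus] by simp

lemma alg_power: "f \<in> alg B \<Longrightarrow> (\<lambda>t. f t ^ n) \<in> alg B"
  by (induction n) (auto intro: alg.intros)

definition deriv_closed :: "real set \<Rightarrow> (real \<Rightarrow> 'a::real_normed_vector) set \<Rightarrow> bool" where
  "deriv_closed I F \<longleftrightarrow> (\<forall>f\<in>F. \<exists>g\<in>F. \<forall>t\<in>I. (f has_vector_derivative g t) (at t))"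

lemma alg_deriv_closed:
  assumes "\<forall>f\<in>B. \<exists>g\<in>alg B. \<forall>t\<in>I. (f has_vector_derivative g t) (at t)"
  shows "deriv_closed I (alg B)"
  unfolding deriv_closed_def
proof
  fix f assume "f \<in> alg B"
  then show "\<exists>g\<in>alg B. \<forall>t\<in>I. (f has_vector_derivative g t) (at t)"
  proof induction
    case (alg_base f) then show ?case using assms by blast
  next
    case (alg_const c) then show ?case
      by (intro bexI[of _ "\<lambda>_. 0"]) (auto intro: alg.intros derivative_eq_intros)
  next
    case (alg_add f g)
    then obtain f' g' where "f' \<in> alg B" "g' \<in> alg B"
      "\<forall>t\<in>I. (f has_vector_derivative f' t) (at t)" "\<forall>t\<in>I. (g has_vector_derivative g' t) (at t)" by blast
    then show ?case
      by (intro bexI[of _ "\<lambda>t. f' t + g' t"]) (auto intro: alg.intros derivative_eq_intros)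
  next
    case (alg_mult f g)
    then obtain f' g' where fg: "f' \<in> alg B" "g' \<in> alg B"
      "\<forall>t\<in>I. (f has_vector_derivative f' t) (at t)" "\<forall>t\<in>I. (g has_vector_derivative g' t) (at t)" by blast
    have "(\<lambda>t. f t * g' t + f' t * g t) \<in> alg B"
      by (rule alg_add[OF alg.alg_mult[OF alg_mult.hyps(1) fg(2)] alg.alg_mult[OF fg(1) alg_mult.hyps(2)]])
    then show ?case
      by (intro bexI[of _ "\<lambda>t. f t * g' t + f' t * g t"]) (use fg in \<open>auto intro: has_vector_derivative_mult\<close>)
  next
    case (alg_cnj f)
    then obtain f' where "f' \<in> alg B" "\<forall>t\<in>I. (f has_vector_derivative f' t) (at t)" by blast
    then show ?case
      by (intro bexI[of _ "\<lambda>t. cnj (f' t)"]) (auto intro: alg.intros has_vector_derivative_cnj)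
  qed
qed

lemma deriv_closed_tower:
  assumes "deriv_closed I F"
  obtains d where "\<And>f. f \<in> F \<Longrightarrow> d f \<in> F" "\<And>f t. f \<in> F \<Longrightarrow> t \<in> I \<Longrightarrow> (f has_vector_derivative d f t) (at t)"
proof -
  from assms have "\<forall>f\<in>F. \<exists>g. g \<in> F \<and> (\<forall>t\<in>I. (f has_vector_derivative g t) (at t))"
    unfolding deriv_closed_def by blast
  then obtain d where "\<forall>f\<in>F. d f \<in> F \<and> (\<forall>t\<in>I. (f has_vector_derivative d f t) (at t))"
    by metis
  then show ?thesis using that by blast
qed

lemma deriv_closed_smooth:
  assumes "deriv_closed I F" "f \<in> F"
  shows "smooth_on I f"
proof -
  obtain d where d1: "\<And>f. f \<in> F \<Longrightarrow> d f \<in> F"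
    and d2: "\<And>f t. f \<in> F \<Longrightarrow> t \<in> I \<Longrightarrow> (f has_vector_derivative d f t) (at t)"
    using deriv_closed_tower[OF assms(1)] by metis
  have F: "(d ^^ n) f \<in> F" for n by (induction n) (use assms d1 in auto)
  show ?thesis unfolding smooth_on_def
    by (intro exI[of _ "\<lambda>n. (d ^^ n) f"]) (use F d2 in auto)
qed

lemma bounded_linear_mat2: "bounded_linear (\<lambda>(a, b, c, d). mat2 a b c d)"
proof -
  have "linear (\<lambda>(a, b, c, d). mat2 a b c d)"
    by (rule linearI) (auto simp: cmat2_eq_iff)
  then show ?thesis by (simp add: linear_conv_bounded_linear)
qed

lemma has_vector_derivative_mat2:
  assumes "(a has_vector_derivative a') (at t)" "(b has_vector_derivative b') (at t)"
    "(c has_vector_derivative c') (at t)" "(d has_vector_derivative d') (at t)"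
  shows "((\<lambda>t. mat2 (a t) (b t) (c t) (d t)) has_vector_derivative mat2 a' b' c' d') (at t)"
proof -
  have "((\<lambda>t. (a t, b t, c t, d t)) has_vector_derivative (a', b', c', d')) (at t)"
    using assms by (intro has_vector_derivative_Pair)
  from bounded_linear.has_vector_derivative[OF bounded_linear_mat2 this] show ?thesis by simp
qed

lemma has_vector_derivative_entry:
  fixes f :: "real \<Rightarrow> 'a::real_normed_vector^'n^'m"
  assumes "(f has_vector_derivative f') (at t)"
  shows "((\<lambda>t. f t $ i $ j) has_vector_derivative f' $ i $ j) (at t)"
proof -
  have "bounded_linear (\<lambda>x::'a^'n^'m. x $ i $ j)"
    using bounded_linear_compose[OF bounded_linear_vec_nth[of j] bounded_linear_vec_nth[of i]] by simp
  from bounded_linear.has_vector_derivative[OF this assms] show ?thesis .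
qed

lemma smooth_mat2:
  assumes "deriv_closed I F" "a \<in> F" "b \<in> F" "c \<in> F" "d \<in> F"
  shows "smooth_on I (\<lambda>t. mat2 (a t) (b t) (c t) (d t))"
proof -
  obtain dd where d1: "\<And>f. f \<in> F \<Longrightarrow> dd f \<in> F"
    and d2: "\<And>f t. f \<in> F \<Longrightarrow> t \<in> I \<Longrightarrow> (f has_vector_derivative dd f t) (at t)"
    using deriv_closed_tower[OF assms(1)] by metis
  have F: "f \<in> F \<Longrightarrow> (dd ^^ n) f \<in> F" for n f by (induction n) (use d1 in auto)
  show ?thesis unfolding smooth_on_def
    by (intro exI[of _ "\<lambda>n t. mat2 ((dd ^^ n) a t) ((dd ^^ n) b t) ((dd ^^ n) c t) ((dd ^^ n) d t)"])
      (use F d2 assms in \<open>auto intro!: has_vector_derivative_mat2\<close>)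
qed

lemma smooth_Re:
  assumes "smooth_on I f"
  shows "smooth_on I (\<lambda>t. Re (f t))"
proof -
  obtain D where D: "D 0 = f" "\<forall>n. \<forall>t\<in>I. (D n has_vector_derivative D (Suc n) t) (at t)"
    using assms unfolding smooth_on_def by blast
  show ?thesis unfolding smooth_on_def
    by (intro exI[of _ "\<lambda>n t. Re (D n t)"])
       (use D in \<open>auto intro!: bounded_linear.has_vector_derivative[OF bounded_linear_Re]\<close>)
qed


lemma sqrt_deriv:
  fixes g h :: "real \<Rightarrow> complex"
  assumes cont: "continuous (at t) g" and g0: "g t \<noteq> 0"
    and hd: "(h has_vector_derivative h') (at t)"
    and S: "open S" "t \<in> S" and sq: "\<And>s. s \<in> S \<Longrightarrow> g s ^ 2 = h s"
  shows "(g has_vector_derivative h' / (2 * g t)) (at t)"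
proof -
  define g0 where "g0 = g t"
  have h0: "h t = g0^2" using sq S by (simp add: g0_def)
  have h0nz: "h t \<noteq> 0" using h0 g0 by (simp add: g0_def)
  define r where "r s = h s / h t" for s
  have rd: "(r has_vector_derivative h' / h t) (at t)"
    unfolding r_def using hd by (intro derivative_eq_intros) auto
  have r1: "r t = 1" using h0nz by (simp add: r_def)
  have cs: "(csqrt has_field_derivative inverse (2 * csqrt (r t))) (at (r t))"
    using r1 by (intro has_field_derivative_csqrt) auto
  have "((csqrt \<circ> r) has_vector_derivative (h' / h t) * inverse (2 * csqrt (r t))) (at t)"
    by (rule field_vector_diff_chain_at[OF rd cs])
  then have G: "((\<lambda>s. g0 * csqrt (r s)) has_vector_derivative g0 * ((h' / h t) * inverse 2)) (at t)"
    using has_vector_derivative_mult_right[OF \<open>((csqrt \<circ> r) has_vector_derivative _) (at t)\<close>, of g0] r1 by (simp add: o_def)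
  have eqd: "g0 * ((h' / h t) * inverse 2) = h' / (2 * g t)"
    using g0 by (simp add: h0 g0_def field_simps power2_eq_square)
  have c1: "((\<lambda>s. g s / g0) \<longlongrightarrow> 1) (at t)"
  proof -
    have "((\<lambda>s. g s / g0) \<longlongrightarrow> g t / g0) (at t)"
      using cont g0 by (intro tendsto_intros) (auto simp: continuous_at g0_def)
    then show ?thesis using g0 by (simp add: g0_def)
  qed
  have c2: "((\<lambda>s. csqrt (r s)) \<longlongrightarrow> 1) (at t)"
  proof -
    have "continuous (at t) r" using rd by (rule has_vector_derivative_continuous)
    then have "isCont (\<lambda>s. csqrt (r s)) t"
      using r1 by (intro continuous_at_compose[unfolded o_def, of t r csqrt] continuous_at_csqrt) auto
    then show ?thesis using r1 by (simp add: isCont_def)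
  qed
  have ev: "eventually (\<lambda>s. g s = g0 * csqrt (r s)) (at t)"
  proof -
    have e1: "eventually (\<lambda>s. dist (g s / g0) 1 < 1/2) (at t)" using c1 by (rule tendstoD) auto
    have e2: "eventually (\<lambda>s. dist (csqrt (r s)) 1 < 1/2) (at t)" using c2 by (rule tendstoD) auto
    have e3: "eventually (\<lambda>s. s \<in> S) (at t)" using S by (intro eventually_at_in_open') auto
    show ?thesis using e1 e2 e3
    proof eventually_elim
      case (elim s)
      have "(g s / g0)^2 = r s" using sq[OF elim(3)] g0 by (simp add: r_def h0 g0_def power_divide)
      also have "\<dots> = (csqrt (r s))^2" by simp
      finally have "g s / g0 = csqrt (r s) \<or> g s / g0 = - csqrt (r s)"
        using power2_eq_iff by blast
      moreover have "g s / g0 \<noteq> - csqrt (r s)"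
      proof
        assume a: "g s / g0 = - csqrt (r s)"
        have "2 = norm ((1 - g s / g0) + (1 - csqrt (r s)))" using a by simp
        also have "\<dots> \<le> norm (1 - g s / g0) + norm (1 - csqrt (r s))" by (rule norm_triangle_ineq)
        also have "\<dots> < 1" using elim(1,2) by (simp add: dist_norm norm_minus_commute)
        finally show False by simp
      qed
      ultimately show ?case using g0 by (simp add: g0_def field_simps)
    qed
  qed
  have ev2: "eventually (\<lambda>s. g s = g0 * csqrt (r s)) (nhds t)"
  proof -
    have "eventually (\<lambda>s. s \<noteq> t \<longrightarrow> g s = g0 * csqrt (r s)) (nhds t)"
      using ev by (simp add: eventually_at_filter)
    then show ?thesis
    proof (rule eventually_mono)
      fix s assume "s \<noteq> t \<longrightarrow> g s = g0 * csqrt (r s)"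
      then show "g s = g0 * csqrt (r s)" using r1 by (cases "s = t") (simp_all add: g0_def)
    qed
  qed
  have "(g has_vector_derivative (h' / (2 * g t))) (at t within UNIV) =
        ((\<lambda>s. g0 * csqrt (r s)) has_vector_derivative (h' / (2 * g t))) (at t within UNIV)"
  proof (rule has_vector_derivative_cong_ev)
    show "\<forall>\<^sub>F x in nhds t. x \<in> UNIV \<longrightarrow> g x = g0 * csqrt (r x)" using ev2 by simp
    show "g t = g0 * csqrt (r t)" using r1 by (simp add: g0_def)
  qed
  then show ?thesis using G eqd by simp
qed


lemma reality_lemma:
  fixes x11 x12 x21 x22 a11 a12 a21 a22 u1 u2 :: complex and w :: real
  assumes hX: "cnj x11 = x11" "cnj x22 = x22" "x21 = cnj x12"
    and detX: "x11*x22 - x12*x21 = -1"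
    and hA: "cnj a11 = a11" "cnj a22 = a22" "a21 = cnj a12"
    and P11: "2*w*u1^2 = \<i>*(a11*x12 - a12*x11)"
    and P12: "2*w*(u1*u2) = \<i>*(a11*x22 - a12*x21)"
    and P21: "2*w*(u1*u2) = \<i>*(a21*x12 - a22*x11)"
    and P22: "2*w*u2^2 = \<i>*(a21*x22 - a22*x21)"
    and tr: "w * Re (a11 + a22) > 0"
  shows "cnj u1 = -\<i>*(x21*u1 - x11*u2) \<and> cnj u2 = -\<i>*(x22*u1 - x12*u2) \<and>
    a11 = 2*w*u1*cnj u1 \<and> a12 = 2*w*u1*cnj u2 \<and> a21 = 2*w*u2*cnj u1 \<and> a22 = 2*w*u2*cnj u2"
proof -
  define \<alpha> where "\<alpha> = -\<i>*(x21*u1 - x11*u2)"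
  define \<beta> where "\<beta> = -\<i>*(x22*u1 - x12*u2)"
  have ii: "\<i>*\<i> = (-1::complex)" by simp
  have A11: "a11 = 2*w*u1*\<alpha>" unfolding \<alpha>_def
    using P11 P12 detX ii by algebra
  have A21: "a21 = 2*w*u2*\<alpha>" unfolding \<alpha>_def
    using P21 P22 detX ii by algebra
  have A12: "a12 = 2*w*u1*\<beta>" unfolding \<beta>_def
    using P11 P12 detX ii by algebra
  have A22: "a22 = 2*w*u2*\<beta>" unfolding \<beta>_def
    using P21 P22 detX ii by algebra
  have w0: "w \<noteq> 0" using tr by auto
  have cw: "cnj (complex_of_real w) = complex_of_real w" by simp
  have ca: "cnj \<alpha> = \<i>*(x12 * cnj u1 - x11 * cnj u2)"
    unfolding \<alpha>_def using hX by simp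
  have cb: "cnj \<beta> = \<i>*(x22 * cnj u1 - x21 * cnj u2)"
    unfolding \<beta>_def using hX by simp
  have inv1: "cnj u1 = -\<i>*(cnj \<alpha>*x21 - cnj \<beta>*x11)"
    unfolding ca cb using detX ii by algebra
  have inv2: "cnj u2 = -\<i>*(cnj \<alpha>*x22 - cnj \<beta>*x12)"
    unfolding ca cb using detX ii by algebra
  have r1: "cnj (u1*\<alpha>) = u1*\<alpha>"
  proof -
    have "cnj a11 = a11" by (rule hA(1))
    then have "complex_of_real w * (2 * cnj (u1*\<alpha>)) = complex_of_real w * (2 * (u1*\<alpha>))"
      using A11 by (simp add: algebra_simps)
    then show ?thesis using w0 by simp
  qed
  have r2: "cnj (u2*\<beta>) = u2*\<beta>"
  proof -
    have "cnj a22 = a22" by (rule hA(2))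
    then have "complex_of_real w * (2 * cnj (u2*\<beta>)) = complex_of_real w * (2 * (u2*\<beta>))"
      using A22 by (simp add: algebra_simps)
    then show ?thesis using w0 by simp
  qed
  have r3: "u2*\<alpha> = cnj (u1*\<beta>)"
  proof -
    have "complex_of_real w * (2 * (u2*\<alpha>)) = complex_of_real w * (2 * cnj (u1*\<beta>))"
      using A21 A12 hA(3) by (simp add: algebra_simps) metis
    then show ?thesis using w0 by simp
  qed
  define L where "L = u1*\<alpha> + u2*\<beta>"
  have Lr: "cnj L = L" unfolding L_def using r1 r2 by simp
  have r1': "cnj u1 * cnj \<alpha> = u1*\<alpha>" using r1 by simp
  have r2': "cnj u2 * cnj \<beta> = u2*\<beta>" using r2 by simp
  have r3': "u2*\<alpha> = cnj u1 * cnj \<beta>" using r3 by simp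
  have r3'': "cnj u2 * cnj \<alpha> = u1 * \<beta>" using arg_cong[OF r3, of cnj] by (simp add: mult.commute)
  have al: "\<alpha> * (u1*cnj u1 + u2*cnj u2) = cnj u1 * L"
    unfolding L_def using r2' r3' by algebra
  have be: "\<beta> * (u1*cnj u1 + u2*cnj u2) = cnj u2 * L"
    unfolding L_def using r1' r3'' by algebra
  have trL: "a11 + a22 = 2*w*L" unfolding L_def using A11 A22 by (simp add: algebra_simps)
  obtain l where l: "L = complex_of_real l" using Lr by (metis Reals_cases Reals_cnj_iff)
  have "Re (a11 + a22) = 2*w*l" using trL l by simp
  then have "(w*w)*(2*l) > 0" using tr by (simp add: algebra_simps)
  moreover have "w*w > 0" using w0 by (metis not_real_square_gt_zero)
  ultimately have lpos: "l > 0" by (simp add: zero_less_mult_iff)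
  define n where "n = ((Re u1)^2 + (Im u1)^2) + ((Re u2)^2 + (Im u2)^2)"
  have nn: "u1*cnj u1 + u2*cnj u2 = complex_of_real n"
    unfolding n_def by (simp add: complex_mult_cnj)
  have u0: "u1 \<noteq> 0 \<or> u2 \<noteq> 0"
  proof (rule ccontr)
    assume "\<not> (u1 \<noteq> 0 \<or> u2 \<noteq> 0)"
    then have "a11 = 0" "a22 = 0" using A11 A22 by auto
    then show False using tr by simp
  qed
  have npos: "n > 0" unfolding n_def using u0
    by (auto simp: add_pos_nonneg add_nonneg_pos complex_eq_iff sum_power2_gt_zero_iff)
  define m where "m = l / n"
  have al2: "\<alpha> = complex_of_real m * cnj u1"
    using al npos unfolding nn l m_def by (simp add: field_simps)
  have be2: "\<beta> = complex_of_real m * cnj u2"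
    using be npos unfolding nn l m_def by (simp add: field_simps)
  have "cnj u1 = complex_of_real m * (-\<i>*(x21*u1 - x11*u2))"
    using inv1 unfolding al2 be2 by (simp add: algebra_simps)
  also have "\<dots> = complex_of_real m * \<alpha>" by (simp only: \<alpha>_def)
  also have "\<dots> = complex_of_real (m*m) * cnj u1" using al2 by simp
  finally have e1: "cnj u1 = complex_of_real (m*m) * cnj u1" .
  have "cnj u2 = complex_of_real m * (-\<i>*(x22*u1 - x12*u2))"
    using inv2 unfolding al2 be2 by (simp add: algebra_simps)
  also have "\<dots> = complex_of_real m * \<beta>" by (simp only: \<beta>_def)
  also have "\<dots> = complex_of_real (m*m) * cnj u2" using be2 by simp
  finally have e2: "cnj u2 = complex_of_real (m*m) * cnj u2" .
  have "complex_of_real (m*m) = 1"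
  proof (cases "u1 = 0")
    case True
    then have "cnj u2 \<noteq> 0" using u0 by simp
    then show ?thesis using e2 by (metis mult_cancel_right2)
  next
    case False
    then have "cnj u1 \<noteq> 0" by simp
    then show ?thesis using e1 by (metis mult_cancel_right2)
  qed
  then have mm: "m*m = 1" by (simp only: of_real_eq_1_iff)
  have mp: "m > 0" unfolding m_def using lpos npos by simp
  have "(m - 1) * (m + 1) = 0" using mm by (simp add: algebra_simps)
  then have m1: "m = 1" using mp by simp
  have "\<alpha> = cnj u1" "\<beta> = cnj u2" using al2 be2 m1 by auto
  then show ?thesis using A11 A12 A21 A22 unfolding \<alpha>_def \<beta>_def by auto
qed


lemma deriv_eq_on:
  assumes "open I" "t \<in> I" "\<And>s. s \<in> I \<Longrightarrow> f s = g s"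
    "(f has_vector_derivative f') (at t)" "(g has_vector_derivative g') (at t)"
  shows "f' = g'"
proof -
  have "(g has_vector_derivative f') (at t)"
    using has_vector_derivative_transform_within_open[OF assms(4,1,2)] assms(3) by blast
  then show ?thesis using assms(5) by (rule vector_derivative_unique_at)
qed

lemma deriv_const_on:
  assumes "open I" "t \<in> I" "\<And>s. s \<in> I \<Longrightarrow> f s = c"
    "(f has_vector_derivative f') (at t)"
  shows "f' = 0"
  using deriv_eq_on[OF assms(1,2,3,4), of 0] by simp

lemma alg_mono: "f \<in> alg B \<Longrightarrow> B \<subseteq> B' \<Longrightarrow> f \<in> alg B'"
  by (induction rule: alg.induct) (auto intro: alg.intros)

lemma inverse_deriv:
  fixes g :: "real \<Rightarrow> complex"
  assumes "(g has_vector_derivative g') (at t)" "g t \<noteq> 0"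
  shows "((\<lambda>s. inverse (g s)) has_vector_derivative - g' * inverse (g t) * inverse (g t)) (at t)"
proof -
  have "((inverse \<circ> g) has_vector_derivative g' * - (inverse (g t) ^ Suc (Suc 0))) (at t)"
    by (rule field_vector_diff_chain_at[OF assms(1) DERIV_inverse[OF assms(2)]])
  then show ?thesis by (simp add: o_def power2_eq_square mult.assoc)
qed

lemma gen_inv:
  assumes "open I" "ig \<in> B" "g' \<in> alg B"
    "\<And>t. t \<in> I \<Longrightarrow> (g has_vector_derivative g' t) (at t)"
    "\<And>t. t \<in> I \<Longrightarrow> g t * ig t = 1"
  shows "\<exists>h\<in>alg B. \<forall>t\<in>I. (ig has_vector_derivative h t) (at t)"
proof (intro bexI ballI)
  show "(\<lambda>t. - g' t * ig t * ig t) \<in> alg B"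
    by (rule alg_mult[OF alg_mult[OF alg_minus[OF assms(3)] alg_base[OF assms(2)]] alg_base[OF assms(2)]])
  fix t assume t: "t \<in> I"
  have gt: "g t \<noteq> 0" using assms(5)[OF t] by auto
  have "((\<lambda>s. inverse (g s)) has_vector_derivative - g' t * inverse (g t) * inverse (g t)) (at t)"
    by (rule inverse_deriv[OF assms(4)[OF t] gt])
  then have "(ig has_vector_derivative - g' t * inverse (g t) * inverse (g t)) (at t)"
  proof (rule has_vector_derivative_transform_within_open[OF _ assms(1) t])
    fix y assume "y \<in> I"
    show "inverse (g y) = ig y" by (rule inverse_unique[OF assms(5)[OF \<open>y \<in> I\<close>]])
  qed
  moreover have "ig t = inverse (g t)" using inverse_unique[OF assms(5)[OF t]] by simp
  ultimately show "(ig has_vector_derivative - g' t * ig t * ig t) (at t)" by simp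
qed

lemma gen_sqrt:
  assumes "open I" "ig \<in> B" "h' \<in> alg B"
    "\<And>t. t \<in> I \<Longrightarrow> (h has_vector_derivative h' t) (at t)"
    "\<And>t. t \<in> I \<Longrightarrow> g t * ig t = 1"
    "\<And>t. t \<in> I \<Longrightarrow> g t ^ 2 = h t"
    "\<And>t. t \<in> I \<Longrightarrow> continuous (at t) g"
  shows "\<exists>k\<in>alg B. \<forall>t\<in>I. (g has_vector_derivative k t) (at t)"
proof (intro bexI ballI)
  show "(\<lambda>t. h' t * ig t * (1/2)) \<in> alg B"
    by (rule alg_mult[OF alg_mult[OF assms(3) alg_base[OF assms(2)]] alg_const])
  fix t assume t: "t \<in> I"
  have gt: "g t \<noteq> 0" using assms(5)[OF t] by auto
  have "(g has_vector_derivative h' t / (2 * g t)) (at t)"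
    by (rule sqrt_deriv[OF assms(7)[OF t] gt assms(4)[OF t] assms(1) t assms(6)])
  moreover have "h' t / (2 * g t) = h' t * inverse (g t) * (1/2)"
    using gt by (simp add: field_simps)
  moreover have "inverse (g t) = ig t" by (rule inverse_unique[OF assms(5)[OF t]])
  ultimately show "(g has_vector_derivative h' t * ig t * (1/2)) (at t)" by simp
qed

lemma bounded_linear_adj: "bounded_linear adj"
proof -
  have "linear adj"
    by (rule linearI) (auto simp: adj_def vec_eq_iff)
  then show ?thesis by (simp add: linear_conv_bounded_linear)
qed

lemma hermitian_iff: "hermitian X \<longleftrightarrow> cnj (X$1$1) = X$1$1 \<and> cnj (X$2$2) = X$2$2 \<and> X$2$1 = cnj (X$1$2)"
  unfolding hermitian_def adj_def cmat2_eq_iff by auto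

definition bil :: "cmat2 \<Rightarrow> cmat2 \<Rightarrow> complex" where
  "bil A B = A$1$1 * B$2$2 + B$1$1 * A$2$2 - A$1$2 * B$2$1 - B$1$2 * A$2$1"

lemma det_add_bil: "det (A + B) = det A + det B + bil A B"
  by (simp add: det_2 bil_def algebra_simps)

lemma lor_bil: "lor X Y = - Re (bil X Y) / 2"
  by (simp add: lor_def det_add_bil)

lemma bil_self: "bil A A = 2 * det A"
  by (simp add: det_2 bil_def)

lemma bil_comm: "bil A B = bil B A"
  by (simp add: bil_def algebra_simps)

lemma det_deriv:
  assumes "(F has_vector_derivative F') (at t)"
  shows "((\<lambda>s. det (F s)) has_vector_derivative bil (F t) F') (at t)"
proof -
  have e: "\<And>i j. ((\<lambda>s. F s $ i $ j) has_vector_derivative F' $ i $ j) (at t)"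
    using has_vector_derivative_entry[OF assms] by blast
  have "((\<lambda>s. F s $ 1 $ 1 * F s $ 2 $ 2 - F s $ 1 $ 2 * F s $ 2 $ 1) has_vector_derivative
     (F t $1$1 * F' $2$2 + F' $1$1 * F t $2$2) - (F t $1$2 * F' $2$1 + F' $1$2 * F t $2$1)) (at t)"
    by (intro has_vector_derivative_diff has_vector_derivative_mult e)
  then show ?thesis by (simp add: det_2 bil_def algebra_simps)
qed

lemma bil_deriv:
  assumes "(F has_vector_derivative F') (at t)" "(G has_vector_derivative G') (at t)"
  shows "((\<lambda>s. bil (F s) (G s)) has_vector_derivative bil F' (G t) + bil (F t) G') (at t)"
proof -
  have e: "\<And>i j. ((\<lambda>s. F s $ i $ j) has_vector_derivative F' $ i $ j) (at t)"
    using has_vector_derivative_entry[OF assms(1)] by blast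
  have f: "\<And>i j. ((\<lambda>s. G s $ i $ j) has_vector_derivative G' $ i $ j) (at t)"
    using has_vector_derivative_entry[OF assms(2)] by blast
  have "((\<lambda>s. F s$1$1 * G s$2$2 + G s$1$1 * F s$2$2 - F s$1$2 * G s$2$1 - G s$1$2 * F s$2$1)
     has_vector_derivative
       (F t$1$1 * G'$2$2 + F'$1$1 * G t$2$2) + (G t$1$1 * F'$2$2 + G'$1$1 * F t$2$2)
     - (F t$1$2 * G'$2$1 + F'$1$2 * G t$2$1) - (G t$1$2 * F'$2$1 + G'$1$2 * F t$2$1)) (at t)"
    by (intro has_vector_derivative_diff has_vector_derivative_add has_vector_derivative_mult e f)
  then show ?thesis by (simp add: bil_def algebra_simps)
qed


lemma real_entry: "cnj z = z \<Longrightarrow> z = complex_of_real (Re z)"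
  by (metis Reals_cnj_iff Reals_cases Re_complex_of_real)

lemma neg_det_real:
  fixes p r a c :: real and q b :: complex
  assumes d: "p*r = (Re q)^2 + (Im q)^2" and nz: "p \<noteq> 0 \<or> r \<noteq> 0"
    and bl: "p*c + a*r - 2*(Re b * Re q + Im b * Im q) = 0"
    and ge: "a*c - ((Re b)^2 + (Im b)^2) \<ge> 0"
  shows "\<exists>l. a = l*p \<and> b = complex_of_real l * q \<and> c = l*r"
proof (cases "p = 0")
  case False
  have key: "p^2*(a*c - ((Re b)^2 + (Im b)^2)) = - ((p*Re b - a*Re q)^2 + (p*Im b - a*Im q)^2)"
    using d bl by algebra
  have "p^2*(a*c - ((Re b)^2 + (Im b)^2)) \<ge> 0" using ge by simp
  then have "(p*Re b - a*Re q)^2 + (p*Im b - a*Im q)^2 \<le> 0" using key by linarith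
  then have "p*Re b - a*Re q = 0 \<and> p*Im b - a*Im q = 0"
    by (simp only: sum_power2_le_zero_iff)
  then have z1: "p*Re b = a*Re q" and z2: "p*Im b = a*Im q" by simp_all
  define l where "l = a/p"
  have "Re b = l * Re q" "Im b = l * Im q" using z1 z2 False by (simp_all add: l_def field_simps)
  then have bq: "b = complex_of_real l * q" by (simp add: complex_eq_iff)
  have "p*c = a*r"
  proof -
    have "p*c = 2*(Re b * Re q + Im b * Im q) - a*r" using bl by linarith
    also have "\<dots> = 2*l*(p*r) - a*r" unfolding d using \<open>Re b = _\<close> \<open>Im b = _\<close> by (simp add: algebra_simps power2_eq_square)
    also have "\<dots> = a*r" using False by (simp add: l_def field_simps)
    finally show ?thesis .
  qed
  then have "c = l*r" using False by (simp add: l_def field_simps)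
  moreover have "a = l*p" using False by (simp add: l_def)
  ultimately show ?thesis using bq by blast
next
  case True
  then have r0: "r \<noteq> 0" using nz by simp
  have "(Re q)^2 + (Im q)^2 = 0" using d True by simp
  then have q0: "q = 0" by (simp add: complex_eq_iff sum_power2_eq_zero_iff)
  have "a = 0" using bl True q0 r0 by simp
  then have "(Re b)^2 + (Im b)^2 \<le> 0" using ge by simp
  then have "b = 0" by (simp add: complex_eq_iff sum_power2_le_zero_iff)
  show ?thesis using \<open>a = 0\<close> \<open>b = 0\<close> q0 True r0 by (intro exI[of _ "c/r"]) simp
qed

lemma neg_det:
  assumes hA: "hermitian A" and hB: "hermitian B" and dA: "det A = 0" and A0: "A \<noteq> 0"
    and bl: "bil A B = 0" and nl: "\<And>l::real. B \<noteq> l *\<^sub>R A"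
  shows "Re (det B) < 0"
proof (rule ccontr)
  assume "\<not> Re (det B) < 0"
  then have ge: "Re (det B) \<ge> 0" by simp
  define p where "p = Re (A$1$1)"
  define r where "r = Re (A$2$2)"
  define a where "a = Re (B$1$1)"
  define c where "c = Re (B$2$2)"
  define q where "q = A$1$2"
  define b where "b = B$1$2"
  have A: "A = mat2 (complex_of_real p) q (cnj q) (complex_of_real r)"
    using hA unfolding hermitian_iff p_def r_def q_def
    by (subst mat2_eta) (metis real_entry)
  have B: "B = mat2 (complex_of_real a) b (cnj b) (complex_of_real c)"
    using hB unfolding hermitian_iff a_def c_def b_def
    by (subst mat2_eta) (metis real_entry)
  have d: "p*r = (Re q)^2 + (Im q)^2"
    using arg_cong[OF dA, of Re] unfolding A by (simp add: det_mat2 power2_eq_square)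
  have nz: "p \<noteq> 0 \<or> r \<noteq> 0"
  proof (rule ccontr)
    assume "\<not> (p \<noteq> 0 \<or> r \<noteq> 0)"
    then have "(Re q)^2 + (Im q)^2 = 0" using d by simp
    then have "q = 0" by (simp add: complex_eq_iff sum_power2_eq_zero_iff)
    then show False using A0 \<open>\<not> (p \<noteq> 0 \<or> r \<noteq> 0)\<close> unfolding A by (simp add: mat2_zero mat2_eq)
  qed
  have bl': "p*c + a*r - 2*(Re b * Re q + Im b * Im q) = 0"
    using arg_cong[OF bl, of Re] unfolding A B by (simp add: bil_def)
  have ge': "a*c - ((Re b)^2 + (Im b)^2) \<ge> 0"
    using ge unfolding B by (simp add: det_mat2 power2_eq_square)
  obtain l where "a = l*p" "b = complex_of_real l * q" "c = l*r"
    using neg_det_real[OF d nz bl' ge'] by blast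
  then have "B = l *\<^sub>R A" unfolding A B by (simp only: mat2_scaleR) (simp add: scaleR_conv_of_real)
  then show False using nl by blast
qed

definition rv :: "cmat2 \<Rightarrow> complex \<Rightarrow> complex \<Rightarrow> bool" where
  "rv X y1 y2 \<longleftrightarrow> cnj y1 = -\<i> * (X$2$1 * y1 - X$1$1 * y2) \<and> cnj y2 = -\<i> * (X$2$2 * y1 - X$1$2 * y2)"

lemma rv_det_real:
  assumes "hermitian X" "det X = -1" "rv X a1 a2" "rv X b1 b2"
  shows "cnj (a1*b2 - a2*b1) = a1*b2 - a2*b1"
proof -
  have ii: "\<i>*\<i> = (-1::complex)" by simp
  have dX: "X$1$1 * X$2$2 - X$1$2 * X$2$1 = -1" using assms(2) by (simp add: det_2)
  have "cnj (a1*b2 - a2*b1) = cnj a1 * cnj b2 - cnj a2 * cnj b1" by simp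
  also have "\<dots> = a1*b2 - a2*b1"
    using assms(3,4) unfolding rv_def apply (elim conjE)
    apply (simp only:)
    using dX ii by algebra
  finally show ?thesis .
qed

lemma rv_scale:
  assumes "rv X y1 y2" shows "rv X (complex_of_real s * y1) (complex_of_real s * y2)"
proof -
  have h: "cnj y1 = -\<i> * (X$2$1 * y1 - X$1$1 * y2)" "cnj y2 = -\<i> * (X$2$2 * y1 - X$1$2 * y2)"
    using assms unfolding rv_def by auto
  show ?thesis unfolding rv_def by (simp add: h algebra_simps)
qed

lemma frame_lemma:
  assumes hX: "hermitian X" and dX: "det X = -1" and r1: "rv X e11 e12" and r2: "rv X e21 e22"
    and d1: "e11*e22 - e21*e12 = 1"
  shows "mat2 e11 e21 e12 e22 ** J_mat ** adj (mat2 e11 e21 e12 e22) = X"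
proof -
  have ii: "\<i>*\<i> = (-1::complex)" by simp
  have dX': "X$1$1 * X$2$2 - X$1$2 * X$2$1 = -1" using dX by (simp add: det_2)
  have h: "cnj (X$1$1) = X$1$1" "cnj (X$2$2) = X$2$2" "X$2$1 = cnj (X$1$2)"
    using hX unfolding hermitian_iff by auto
  have h2: "X$1$2 = cnj (X$2$1)" using h(3) by simp
  note c = r1[unfolded rv_def] r2[unfolded rv_def]
  show ?thesis
    unfolding J_mat_def adj_mat2 mat2_mult cmat2_eq_iff mat2_nth
    using c apply (elim conjE)
    apply (simp only:)
    using dX' d1 ii h2 h(1,2) apply (intro conjI)
       apply algebra+
    done
qed

lemma det_rank2:
  fixes a b u1 u2 cu1 cu2 f1 f2 cf1 cf2 :: complex
  shows "(a*u1*cu1 + b*(f1*cu1 + u1*cf1))*(a*u2*cu2 + b*(f2*cu2 + u2*cf2)) -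
         (a*u1*cu2 + b*(f1*cu2 + u1*cf2))*(a*u2*cu1 + b*(f2*cu1 + u2*cf1))
       = - (b^2) * (f1*u2 - f2*u1) * (cf1*cu2 - cf2*cu1)"
  by algebra


lemma det_herm_real: "hermitian X \<Longrightarrow> cnj (det X) = det X"
  unfolding hermitian_iff by (simp add: det_2 algebra_simps)

lemma real_zero: "cnj z = z \<Longrightarrow> Re z = 0 \<Longrightarrow> z = 0"
  by (metis Re_complex_of_real real_entry of_real_0)

locale ncurve =
  fixes I :: "real set" and D :: "nat \<Rightarrow> real \<Rightarrow> cmat2"
  assumes oI: "open_interval I"
    and Dd: "\<And>n t. t \<in> I \<Longrightarrow> (D n has_vector_derivative D (Suc n) t) (at t)"
    and herm0: "\<And>t. t \<in> I \<Longrightarrow> hermitian (D 0 t)"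
    and det0: "\<And>t. t \<in> I \<Longrightarrow> det (D 0 t) = -1"
    and null: "\<And>t. t \<in> I \<Longrightarrow> lor (D 1 t) (D 1 t) = 0"
    and noflex: "\<And>t a b. t \<in> I \<Longrightarrow> a *\<^sub>R D 1 t + b *\<^sub>R (D 2 t - lor (D 2 t) (D 0 t) *\<^sub>R D 0 t) = 0
                        \<Longrightarrow> a = 0 \<and> b = 0"
begin

lemma openI: "open I" and convexI: "convex I" and neI: "I \<noteq> {}"
  using oI unfolding open_interval_def by (auto simp: is_interval_convex)

lemma D01: "t \<in> I \<Longrightarrow> (D 0 has_vector_derivative D 1 t) (at t)"
  using Dd[of t 0] by simp
lemma D12: "t \<in> I \<Longrightarrow> (D 1 has_vector_derivative D 2 t) (at t)"
  using Dd[of t 1] by (simp add: numeral_2_eq_2)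

lemma entry_d: "t \<in> I \<Longrightarrow> ((\<lambda>s. D n s $ i $ j) has_vector_derivative D (Suc n) t $ i $ j) (at t)"
  by (rule has_vector_derivative_entry[OF Dd])

lemma herm: "t \<in> I \<Longrightarrow> hermitian (D n t)"
proof (induction n arbitrary: t)
  case 0 then show ?case by (rule herm0)
next
  case (Suc n)
  have "adj (D (Suc n) t) = D (Suc n) t"
  proof (rule deriv_eq_on[OF openI Suc.prems])
    show "adj (D n s) = D n s" if "s \<in> I" for s using Suc.IH[OF that] by (simp add: hermitian_def)
    show "((\<lambda>s. adj (D n s)) has_vector_derivative adj (D (Suc n) t)) (at t)"
      by (rule bounded_linear.has_vector_derivative[OF bounded_linear_adj Dd[OF Suc.prems]])
    show "(D n has_vector_derivative D (Suc n) t) (at t)" by (rule Dd[OF Suc.prems])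
  qed
  then show ?case by (simp add: hermitian_def)
qed

lemma det1: "t \<in> I \<Longrightarrow> det (D 1 t) = 0"
proof -
  assume t: "t \<in> I"
  have "Re (det (D 1 t)) = 0" using null[OF t] by (simp add: lor_bil bil_self)
  moreover have "cnj (det (D 1 t)) = det (D 1 t)" by (rule det_herm_real[OF herm[OF t]])
  ultimately show ?thesis by (intro real_zero)
qed

lemma bil01: "t \<in> I \<Longrightarrow> bil (D 0 t) (D 1 t) = 0"
  by (rule deriv_const_on[OF openI _ det0 det_deriv[OF D01]])

lemma bil12: "t \<in> I \<Longrightarrow> bil (D 1 t) (D 2 t) = 0"
  by (rule deriv_const_on[OF openI _ det1 det_deriv[OF D12]])

lemma bil02: "t \<in> I \<Longrightarrow> bil (D 0 t) (D 2 t) = 0"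
proof -
  assume t: "t \<in> I"
  have "bil (D 1 t) (D 1 t) + bil (D 0 t) (D 2 t) = 0"
    by (rule deriv_const_on[OF openI t bil01 bil_deriv[OF D01[OF t] D12[OF t]]])
  then show ?thesis using det1[OF t] by (simp add: bil_self)
qed

lemma noflex2: "t \<in> I \<Longrightarrow> a *\<^sub>R D 1 t + b *\<^sub>R D 2 t = 0 \<Longrightarrow> a = 0 \<and> b = 0"
  using noflex[of t a b] bil02[of t] by (simp add: lor_bil bil_comm)

lemma D1nz: "t \<in> I \<Longrightarrow> D 1 t \<noteq> 0"
  using noflex2[of t 1 0] by auto

lemma detneg: "t \<in> I \<Longrightarrow> Re (det (D 2 t)) < 0"
proof -
  assume t: "t \<in> I"
  show ?thesis
  proof (rule neg_det[OF herm[OF t] herm[OF t] det1[OF t] D1nz[OF t] bil12[OF t]])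
    fix l :: real show "D 2 t \<noteq> l *\<^sub>R D 1 t"
    proof
      assume "D 2 t = l *\<^sub>R D 1 t"
      then have "(-l) *\<^sub>R D 1 t + 1 *\<^sub>R D 2 t = 0" by simp
      from noflex2[OF t this] show False by simp
    qed
  qed
qed

lemma trnz: "t \<in> I \<Longrightarrow> Re (D 1 t $1$1 + D 1 t $2$2) \<noteq> 0"
proof
  assume t: "t \<in> I" and z: "Re (D 1 t $1$1 + D 1 t $2$2) = 0"
  have h: "cnj (D 1 t $1$1) = D 1 t $1$1" "cnj (D 1 t $2$2) = D 1 t $2$2" "D 1 t $2$1 = cnj (D 1 t $1$2)"
    using herm[OF t] unfolding hermitian_iff by auto
  define p where "p = Re (D 1 t $1$1)"
  define r where "r = Re (D 1 t $2$2)"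
  define q where "q = D 1 t $1$2"
  have A: "D 1 t = mat2 (complex_of_real p) q (cnj q) (complex_of_real r)"
    using h unfolding p_def r_def q_def by (subst mat2_eta) (metis real_entry)
  have d: "p*r = (Re q)^2 + (Im q)^2"
    using arg_cong[OF det1[OF t], of Re] unfolding A by (simp add: det_mat2 power2_eq_square)
  have "r = -p" using z unfolding A by simp
  then have "(Re q)^2 + (Im q)^2 + p^2 = 0" using d by (simp add: power2_eq_square)
  then have "p = 0" "q = 0" by (simp_all add: complex_eq_iff add_nonneg_eq_0_iff)
  then have "D 1 t = 0" using A \<open>r = -p\<close> by (simp add: mat2_zero)
  then show False using D1nz[OF t] by simp
qed

end


context ncurve begin

definition "xe n i j = (\<lambda>t. D n t $ i $ j)"
definition "B0 = {xe n i j | n i j. True}"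

lemma B0_closed: "deriv_closed I (alg B0)"
proof (rule alg_deriv_closed, intro ballI)
  fix f assume "f \<in> B0"
  then obtain n i j where f: "f = xe n i j" unfolding B0_def by blast
  show "\<exists>g\<in>alg B0. \<forall>t\<in>I. (f has_vector_derivative g t) (at t)"
    by (rule bexI[of _ "xe (Suc n) i j"]) (auto simp: f xe_def B0_def intro: alg_base entry_d)
qed

lemma xe_alg: "xe n i j \<in> alg B0"
  unfolding B0_def by (rule alg_base) blast

lemma xe_alg': "(\<lambda>t. D n t $ i $ j) \<in> alg B0"
  using xe_alg unfolding xe_def .

definition "qf t = - Re (det (D 2 t)) / 4"
definition "rr t = sqrt (qf t)"
definition "trf t = Re (D 1 t $1$1 + D 1 t $2$2)"
definition "wfn t = trf t / abs (trf t) * sqrt (rr t)"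
definition "qc t = complex_of_real (qf t)"
definition "rrc t = complex_of_real (rr t)"
definition "irrc t = complex_of_real (1 / rr t)"
definition "wc t = complex_of_real (wfn t)"
definition "iwc t = complex_of_real (1 / wfn t)"

lemma qf_pos: "t \<in> I \<Longrightarrow> qf t > 0"
  using detneg by (simp add: qf_def)
lemma rr_pos: "t \<in> I \<Longrightarrow> rr t > 0"
  using qf_pos by (simp add: rr_def)
lemma trf_nz: "t \<in> I \<Longrightarrow> trf t \<noteq> 0"
  unfolding trf_def by (rule trnz)
lemma wfn_nz: "t \<in> I \<Longrightarrow> wfn t \<noteq> 0"
  using rr_pos[of t] trf_nz[of t] by (simp add: wfn_def)
lemma wfn_sq: "t \<in> I \<Longrightarrow> wfn t ^ 2 = rr t"
proof -
  assume t: "t \<in> I"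
  have "(trf t / abs (trf t))^2 = 1" using trf_nz[OF t] by (simp add: power_divide)
  moreover have "wfn t ^2 = (trf t / abs (trf t))^2 * (sqrt (rr t))^2"
    unfolding wfn_def by (simp only: power_mult_distrib)
  ultimately show ?thesis using rr_pos[OF t] by simp
qed
lemma wfn_tr: "t \<in> I \<Longrightarrow> wfn t * trf t > 0"
proof -
  assume t: "t \<in> I"
  have "wfn t * trf t = (trf t * trf t) / abs (trf t) * sqrt (rr t)" by (simp add: wfn_def)
  also have "\<dots> = (abs (trf t) * abs (trf t)) / abs (trf t) * sqrt (rr t)" by simp
  also have "\<dots> = abs (trf t) * sqrt (rr t)" using trf_nz[OF t] by (simp add: field_simps)
  finally show ?thesis using trf_nz[OF t] rr_pos[OF t] by simp
qed

lemma qc_alg: "qc \<in> alg B0"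
proof -
  define d where "d = (\<lambda>t. D 2 t $1$1 * D 2 t $2$2 - D 2 t $1$2 * D 2 t $2$1)"
  have d: "d \<in> alg B0" unfolding d_def by (intro alg_diff alg_mult xe_alg')
  have aux: "(-1/8) * (z + cnj z) = complex_of_real (- Re z / 4)" for z :: complex
    by (simp add: complex_eq_iff)
  have "qc = (\<lambda>t. (-1/8) * (d t + cnj (d t)))"
  proof (rule ext)
    fix t
    have "d t = det (D 2 t)" by (simp add: d_def det_2)
    then show "qc t = (-1/8) * (d t + cnj (d t))" unfolding aux by (simp add: qc_def qf_def)
  qed
  also have "\<dots> \<in> alg B0" by (intro alg_mult alg_const alg_add alg_cnj d)
  finally show ?thesis .
qed

definition "B1 = B0 \<union> {rrc, irrc, wc, iwc}"

lemma alg01: "f \<in> alg B0 \<Longrightarrow> f \<in> alg B1"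
  by (erule alg_mono) (auto simp: B1_def)

lemma cont_alg0: "f \<in> alg B0 \<Longrightarrow> t \<in> I \<Longrightarrow> continuous (at t) f"
  using B0_closed unfolding deriv_closed_def by (meson has_vector_derivative_continuous)

lemma B1_closed: "deriv_closed I (alg B1)"
proof -
  obtain dq where dq: "dq \<in> alg B0" "\<And>t. t \<in> I \<Longrightarrow> (qc has_vector_derivative dq t) (at t)"
    using B0_closed qc_alg unfolding deriv_closed_def by blast
  have cq: "t \<in> I \<Longrightarrow> continuous (at t) qf" for t
  proof -
    assume t: "t \<in> I"
    have "continuous (at t) (\<lambda>s. Re (qc s))" using cont_alg0[OF qc_alg t] by (rule continuous_Re)
    then show ?thesis by (simp add: qc_def)
  qed
  have crr: "t \<in> I \<Longrightarrow> continuous (at t) rrc" for t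
    unfolding rrc_def rr_def using cq by (intro continuous_intros) auto
  have ctr: "t \<in> I \<Longrightarrow> continuous (at t) trf" for t
  proof -
    assume t: "t \<in> I"
    have "continuous (at t) (\<lambda>s. D 1 s $1$1 + D 1 s $2$2)"
      by (intro continuous_add cont_alg0[OF xe_alg' t])
    then show ?thesis unfolding trf_def by (rule continuous_Re)
  qed
  have cw: "t \<in> I \<Longrightarrow> continuous (at t) wc" for t
  proof -
    assume t: "t \<in> I"
    have c1: "continuous (at t) (\<lambda>s. abs (trf s))" by (intro continuous_intros ctr[OF t])
    have c2: "continuous (at t) (\<lambda>s. trf s / abs (trf s))"
      by (rule continuous_divide[OF ctr[OF t] c1]) (use trf_nz[OF t] in simp)
    have c3: "continuous (at t) (\<lambda>s. sqrt (rr s))" unfolding rr_def by (intro continuous_intros cq[OF t])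
    have "continuous (at t) (\<lambda>s. wfn s)" unfolding wfn_def by (rule continuous_mult[OF c2 c3])
    then show ?thesis unfolding wc_def by (rule continuous_of_real)
  qed
  obtain drr where drr: "drr \<in> alg B1" "\<And>t. t \<in> I \<Longrightarrow> (rrc has_vector_derivative drr t) (at t)"
  proof -
    have "\<exists>k\<in>alg B1. \<forall>t\<in>I. (rrc has_vector_derivative k t) (at t)"
    proof (rule gen_sqrt[OF openI _ alg01[OF dq(1)] dq(2)])
      show "irrc \<in> B1" by (simp add: B1_def)
      show "rrc t * irrc t = 1" if "t \<in> I" for t using rr_pos[OF that] by (simp add: rrc_def irrc_def flip: of_real_mult)
      show "rrc t ^ 2 = qc t" if "t \<in> I" for t using qf_pos[OF that] by (simp add: rrc_def qc_def rr_def flip: of_real_power)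
    qed (use crr in auto)
    then show ?thesis using that by blast
  qed
  have dirr: "\<exists>k\<in>alg B1. \<forall>t\<in>I. (irrc has_vector_derivative k t) (at t)"
  proof (rule gen_inv[OF openI _ drr])
    show "irrc \<in> B1" by (simp add: B1_def)
    show "rrc t * irrc t = 1" if "t \<in> I" for t using rr_pos[OF that] by (simp add: rrc_def irrc_def flip: of_real_mult)
  qed auto
  obtain dw where dw: "dw \<in> alg B1" "\<And>t. t \<in> I \<Longrightarrow> (wc has_vector_derivative dw t) (at t)"
  proof -
    have "\<exists>k\<in>alg B1. \<forall>t\<in>I. (wc has_vector_derivative k t) (at t)"
    proof (rule gen_sqrt[OF openI _ drr])
      show "iwc \<in> B1" by (simp add: B1_def)
      show "wc t * iwc t = 1" if "t \<in> I" for t using wfn_nz[OF that] by (simp add: wc_def iwc_def flip: of_real_mult)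
      show "wc t ^ 2 = rrc t" if "t \<in> I" for t using wfn_sq[OF that] by (simp add: wc_def rrc_def flip: of_real_power)
    qed (use cw in auto)
    then show ?thesis using that by blast
  qed
  have diw: "\<exists>k\<in>alg B1. \<forall>t\<in>I. (iwc has_vector_derivative k t) (at t)"
  proof (rule gen_inv[OF openI _ dw])
    show "iwc \<in> B1" by (simp add: B1_def)
    show "wc t * iwc t = 1" if "t \<in> I" for t using wfn_nz[OF that] by (simp add: wc_def iwc_def flip: of_real_mult)
  qed auto
  show ?thesis
  proof (rule alg_deriv_closed, intro ballI)
    fix f assume "f \<in> B1"
    then consider "f \<in> B0" | "f = rrc" | "f = irrc" | "f = wc" | "f = iwc" unfolding B1_def by blast
    then show "\<exists>g\<in>alg B1. \<forall>t\<in>I. (f has_vector_derivative g t) (at t)"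
    proof cases
      case 1
      then obtain g where "g \<in> alg B0" "\<forall>t\<in>I. (f has_vector_derivative g t) (at t)"
        using B0_closed alg_base[OF 1] unfolding deriv_closed_def by blast
      then show ?thesis using alg01 by blast
    qed (use drr dirr dw diw in auto)
  qed
qed

end


context ncurve begin

definition "pm11 t = \<i>/2 * iwc t * (D 1 t$1$1 * D 0 t$1$2 - D 1 t$1$2 * D 0 t$1$1)"
definition "pm12 t = \<i>/2 * iwc t * (D 1 t$1$1 * D 0 t$2$2 - D 1 t$1$2 * D 0 t$2$1)"
definition "pm21 t = \<i>/2 * iwc t * (D 1 t$2$1 * D 0 t$1$2 - D 1 t$2$2 * D 0 t$1$1)"
definition "pm22 t = \<i>/2 * iwc t * (D 1 t$2$1 * D 0 t$2$2 - D 1 t$2$2 * D 0 t$2$1)"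

lemma iwc_B1: "iwc \<in> alg B1" by (rule alg_base) (simp add: B1_def)
lemma wc_B1: "wc \<in> alg B1" by (rule alg_base) (simp add: B1_def)
lemma xe_B1: "(\<lambda>t. D n t $ i $ j) \<in> alg B1" by (rule alg01[OF xe_alg'])

lemma pm_alg: "pm11 \<in> alg B1" "pm12 \<in> alg B1" "pm21 \<in> alg B1" "pm22 \<in> alg B1"
  unfolding pm11_def[abs_def] pm12_def[abs_def] pm21_def[abs_def] pm22_def[abs_def]
  by (intro alg_mult alg_diff alg_const iwc_B1 xe_B1)+

lemma alg1_deriv: "f \<in> alg B1 \<Longrightarrow> \<exists>g\<in>alg B1. \<forall>t\<in>I. (f has_vector_derivative g t) (at t)"
  using B1_closed unfolding deriv_closed_def by blast

lemma alg1_cont: "f \<in> alg B1 \<Longrightarrow> t \<in> I \<Longrightarrow> continuous (at t) f"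
  using alg1_deriv by (meson has_vector_derivative_continuous)

lemma entries_D0: "t \<in> I \<Longrightarrow> cnj (D 0 t$1$1) = D 0 t$1$1 \<and> cnj (D 0 t$2$2) = D 0 t$2$2 \<and> D 0 t$2$1 = cnj (D 0 t$1$2)"
  using herm unfolding hermitian_iff by blast
lemma entries_D1: "t \<in> I \<Longrightarrow> cnj (D 1 t$1$1) = D 1 t$1$1 \<and> cnj (D 1 t$2$2) = D 1 t$2$2 \<and> D 1 t$2$1 = cnj (D 1 t$1$2)"
  using herm unfolding hermitian_iff by blast
lemma det0': "t \<in> I \<Longrightarrow> D 0 t$1$1 * D 0 t$2$2 - D 0 t$1$2 * D 0 t$2$1 = -1"
  using det0 by (simp add: det_2)
lemma det1': "t \<in> I \<Longrightarrow> D 1 t$1$1 * D 1 t$2$2 - D 1 t$1$2 * D 1 t$2$1 = 0"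
  using det1 by (simp add: det_2)
lemma bil01': "t \<in> I \<Longrightarrow> D 0 t$1$1 * D 1 t$2$2 + D 1 t$1$1 * D 0 t$2$2 - D 0 t$1$2 * D 1 t$2$1 - D 1 t$1$2 * D 0 t$2$1 = 0"
  using bil01 by (simp add: bil_def)

lemma pm_sym: "t \<in> I \<Longrightarrow> pm21 t = pm12 t"
proof -
  assume t: "t \<in> I"
  have "D 1 t$2$1 * D 0 t$1$2 - D 1 t$2$2 * D 0 t$1$1 = D 1 t$1$1 * D 0 t$2$2 - D 1 t$1$2 * D 0 t$2$1"
    using bil01'[OF t] by algebra
  then show ?thesis by (simp add: pm21_def pm12_def)
qed

lemma pm_det: "t \<in> I \<Longrightarrow> pm11 t * pm22 t = pm12 t * pm12 t"
proof -
  assume t: "t \<in> I"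
  have "(D 1 t$1$1 * D 0 t$1$2 - D 1 t$1$2 * D 0 t$1$1) * (D 1 t$2$1 * D 0 t$2$2 - D 1 t$2$2 * D 0 t$2$1)
      = (D 1 t$1$1 * D 0 t$2$2 - D 1 t$1$2 * D 0 t$2$1) * (D 1 t$2$1 * D 0 t$1$2 - D 1 t$2$2 * D 0 t$1$1)"
    using det1'[OF t] by algebra
  moreover have h2: "pm11 t * pm22 t = (\<i>/2 * iwc t) * (\<i>/2 * iwc t) * ((D 1 t$1$1 * D 0 t$1$2 - D 1 t$1$2 * D 0 t$1$1) * (D 1 t$2$1 * D 0 t$2$2 - D 1 t$2$2 * D 0 t$2$1))"
    unfolding pm11_def pm22_def by (simp only: ac_simps)
  moreover have h3: "pm12 t * pm21 t = (\<i>/2 * iwc t) * (\<i>/2 * iwc t) * ((D 1 t$1$1 * D 0 t$2$2 - D 1 t$1$2 * D 0 t$2$1) * (D 1 t$2$1 * D 0 t$1$2 - D 1 t$2$2 * D 0 t$1$1))"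
    unfolding pm12_def pm21_def by (simp only: ac_simps)
  ultimately have "pm11 t * pm22 t = pm12 t * pm21 t" by (simp only:)
  then show ?thesis using pm_sym[OF t] by simp
qed

lemma pm_nz: "t \<in> I \<Longrightarrow> \<not> (pm11 t = 0 \<and> pm12 t = 0 \<and> pm22 t = 0)"
proof
  assume t: "t \<in> I" and z: "pm11 t = 0 \<and> pm12 t = 0 \<and> pm22 t = 0"
  have iw: "iwc t \<noteq> 0" using wfn_nz[OF t] by (simp add: iwc_def)
  have z1: "D 1 t$1$1 * D 0 t$1$2 - D 1 t$1$2 * D 0 t$1$1 = 0" using z iw by (simp add: pm11_def)
  have z2: "D 1 t$1$1 * D 0 t$2$2 - D 1 t$1$2 * D 0 t$2$1 = 0" using z iw by (simp add: pm12_def)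
  have z3: "D 1 t$2$1 * D 0 t$1$2 - D 1 t$2$2 * D 0 t$1$1 = 0" using z pm_sym[OF t] iw by (simp add: pm21_def)
  have z4: "D 1 t$2$1 * D 0 t$2$2 - D 1 t$2$2 * D 0 t$2$1 = 0" using z iw by (simp add: pm22_def)
  note d = det0'[OF t]
  have "D 1 t$1$1 = 0" using z1 z2 d by algebra
  moreover have "D 1 t$1$2 = 0" using z1 z2 d by algebra
  moreover have "D 1 t$2$1 = 0" using z3 z4 d by algebra
  moreover have "D 1 t$2$2 = 0" using z3 z4 d by algebra
  ultimately have "D 1 t = 0" by (simp add: cmat2_eq_iff)
  then show False using D1nz[OF t] by simp
qed

lemma mu_exists: "\<exists>\<mu>. \<forall>t\<in>I. pm11 t + 2*\<mu>*pm12 t + \<mu>^2 * pm22 t \<noteq> 0"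
proof -
  define S where "S = {t\<in>I. pm22 t \<noteq> 0}"
  define f where "f t = pm12 t / pm22 t" for t
  obtain d12 where d12: "\<forall>t\<in>I. (pm12 has_vector_derivative d12 t) (at t)"
    using alg1_deriv[OF pm_alg(2)] by blast
  obtain d22 where d22: "\<forall>t\<in>I. (pm22 has_vector_derivative d22 t) (at t)"
    using alg1_deriv[OF pm_alg(4)] by blast
  have "f differentiable_on S"
    unfolding differentiable_on_def
  proof
    fix t assume "t \<in> S"
    then have t: "t \<in> I" and nz: "pm22 t \<noteq> 0" by (auto simp: S_def)
    have "((\<lambda>s. pm12 s * inverse (pm22 s)) has_vector_derivative
            pm12 t * (- d22 t * inverse (pm22 t) * inverse (pm22 t)) + d12 t * inverse (pm22 t)) (at t)"
      by (intro has_vector_derivative_mult inverse_deriv nz) (use d12 d22 t in auto)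
    then have "f differentiable (at t)"
      unfolding f_def by (simp add: divide_inverse differentiableI_vector)
    then show "f differentiable (at t within S)" by (rule differentiable_at_withinI)
  qed
  then have "negligible (f ` S)"
    by (intro negligible_differentiable_image_lowdim) auto
  then obtain \<nu> where \<nu>: "\<nu> \<notin> f ` S"
    using non_negligible_UNIV by (metis UNIV_eq_I)
  show ?thesis
  proof (intro exI ballI)
    fix t assume t: "t \<in> I"
    show "pm11 t + 2*(-\<nu>)*pm12 t + (-\<nu>)^2 * pm22 t \<noteq> 0"
    proof (cases "pm22 t = 0")
      case True
      then have "pm12 t * pm12 t = 0" using pm_det[OF t] by simp
      then have "pm12 t = 0" by simp
      then have "pm11 t \<noteq> 0" using pm_nz[OF t] True by simp
      then show ?thesis using True \<open>pm12 t = 0\<close> by simp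
    next
      case False
      then have "f t \<noteq> \<nu>" using \<nu> t by (auto simp: S_def)
      then have ne: "pm12 t - \<nu> * pm22 t \<noteq> 0" using False by (auto simp: f_def field_simps)
      have "pm22 t * (pm11 t + 2*(-\<nu>)*pm12 t + (-\<nu>)^2 * pm22 t) = (pm12 t - \<nu> * pm22 t)^2"
        using pm_det[OF t] by (simp add: algebra_simps power2_eq_square)
      then show ?thesis using ne by auto
    qed
  qed
qed

end


locale ncurve2 = ncurve +
  fixes \<mu> :: complex and s :: "real \<Rightarrow> complex"
  assumes s_cont: "continuous_on I s"
    and s_sq: "\<And>t. t \<in> I \<Longrightarrow> s t ^ 2 = pm11 t + 2*\<mu>*pm12 t + \<mu>^2 * pm22 t"
    and z_nz: "\<And>t. t \<in> I \<Longrightarrow> pm11 t + 2*\<mu>*pm12 t + \<mu>^2 * pm22 t \<noteq> 0"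
begin

definition "zf t = pm11 t + 2*\<mu>*pm12 t + \<mu>^2 * pm22 t"
definition "isf t = inverse (s t)"
definition "B2 = B1 \<union> {s, isf}"

lemma alg12: "f \<in> alg B1 \<Longrightarrow> f \<in> alg B2"
  by (erule alg_mono) (auto simp: B2_def)

lemma zf_alg: "zf \<in> alg B1"
  unfolding zf_def[abs_def] by (intro alg_add alg_mult alg_const alg_power pm_alg)

lemma s_nz: "t \<in> I \<Longrightarrow> s t \<noteq> 0"
  using s_sq z_nz by fastforce

lemma B2_closed: "deriv_closed I (alg B2)"
proof -
  obtain dz where dz: "dz \<in> alg B1" "\<And>t. t \<in> I \<Longrightarrow> (zf has_vector_derivative dz t) (at t)"
    using alg1_deriv[OF zf_alg] by blast
  obtain ds where ds: "ds \<in> alg B2" "\<And>t. t \<in> I \<Longrightarrow> (s has_vector_derivative ds t) (at t)"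
  proof -
    have "\<exists>k\<in>alg B2. \<forall>t\<in>I. (s has_vector_derivative k t) (at t)"
    proof (rule gen_sqrt[OF openI _ alg12[OF dz(1)] dz(2)])
      show "isf \<in> B2" by (simp add: B2_def)
      show "s t * isf t = 1" if "t \<in> I" for t using s_nz[OF that] by (simp add: isf_def)
      show "s t ^ 2 = zf t" if "t \<in> I" for t using s_sq[OF that] by (simp add: zf_def)
      show "continuous (at t) s" if "t \<in> I" for t
        using s_cont that openI by (simp add: continuous_on_eq_continuous_at)
    qed
    then show ?thesis using that by blast
  qed
  have dis: "\<exists>k\<in>alg B2. \<forall>t\<in>I. (isf has_vector_derivative k t) (at t)"
  proof (rule gen_inv[OF openI _ ds])
    show "isf \<in> B2" by (simp add: B2_def)
    show "s t * isf t = 1" if "t \<in> I" for t using s_nz[OF that] by (simp add: isf_def)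
  qed auto
  show ?thesis
  proof (rule alg_deriv_closed, intro ballI)
    fix f assume "f \<in> B2"
    then consider "f \<in> B1" | "f = s" | "f = isf" unfolding B2_def by blast
    then show "\<exists>g\<in>alg B2. \<forall>t\<in>I. (f has_vector_derivative g t) (at t)"
    proof cases
      case 1
      then obtain g where "g \<in> alg B1" "\<forall>t\<in>I. (f has_vector_derivative g t) (at t)"
        using alg1_deriv[OF alg_base[OF 1]] by blast
      then show ?thesis using alg12 by blast
    qed (use ds dis in auto)
  qed
qed

lemma alg2_deriv: "f \<in> alg B2 \<Longrightarrow> \<exists>g\<in>alg B2. \<forall>t\<in>I. (f has_vector_derivative g t) (at t)"
  using B2_closed unfolding deriv_closed_def by blast

definition "dv f = (SOME g. g \<in> alg B2 \<and> (\<forall>t\<in>I. (f has_vector_derivative g t) (at t)))"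

lemma dv: assumes "f \<in> alg B2" shows "dv f \<in> alg B2" "\<And>t. t \<in> I \<Longrightarrow> (f has_vector_derivative dv f t) (at t)"
proof -
  have "\<exists>g. g \<in> alg B2 \<and> (\<forall>t\<in>I. (f has_vector_derivative g t) (at t))"
    using alg2_deriv[OF assms] by blast
  from someI_ex[OF this] show "dv f \<in> alg B2" "\<And>t. t \<in> I \<Longrightarrow> (f has_vector_derivative dv f t) (at t)"
    unfolding dv_def by auto
qed

definition "u1 t = (pm11 t + \<mu> * pm12 t) * isf t"
definition "u2 t = (pm21 t + \<mu> * pm22 t) * isf t"

lemma isf_B2: "isf \<in> alg B2" by (rule alg_base) (simp add: B2_def)
lemma u_alg: "u1 \<in> alg B2" "u2 \<in> alg B2"
  unfolding u1_def[abs_def] u2_def[abs_def]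
  by (intro alg_mult alg_add alg_const isf_B2 alg12 pm_alg)+

lemma u_sq: assumes t: "t \<in> I"
  shows "u1 t ^ 2 = pm11 t" "u1 t * u2 t = pm12 t" "u2 t ^ 2 = pm22 t"
proof -
  have z: "s t ^ 2 = zf t" using s_sq[OF t] by (simp add: zf_def)
  have sn: "s t \<noteq> 0" by (rule s_nz[OF t])
  have is2: "isf t ^ 2 = inverse (zf t)" using z by (simp add: isf_def power_inverse)
  have zn: "zf t \<noteq> 0" using z_nz[OF t] by (simp add: zf_def)
  note pd = pm_det[OF t] and ps = pm_sym[OF t]
  have iz: "isf t ^ 2 * zf t = 1" "zf t * isf t ^ 2 = 1" using is2 zn by simp_all
  have "(pm11 t + \<mu> * pm12 t)^2 = pm11 t * zf t"
    using pd unfolding zf_def by (simp add: algebra_simps power2_eq_square)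
  moreover have "u1 t ^ 2 = (pm11 t + \<mu> * pm12 t)^2 * isf t ^ 2"
    by (simp add: u1_def power_mult_distrib)
  ultimately show "u1 t ^ 2 = pm11 t" using iz by (simp add: mult.assoc)
  have "(pm11 t + \<mu> * pm12 t) * (pm21 t + \<mu> * pm22 t) = pm12 t * zf t"
    using pd unfolding zf_def ps by (simp add: algebra_simps power2_eq_square)
  moreover have "u1 t * u2 t = (pm11 t + \<mu> * pm12 t) * (pm21 t + \<mu> * pm22 t) * isf t ^ 2"
    by (simp add: u1_def u2_def power2_eq_square ac_simps)
  ultimately show "u1 t * u2 t = pm12 t" using iz by (simp add: mult.assoc)
  have "(pm21 t + \<mu> * pm22 t)^2 = pm22 t * zf t"
    using pd unfolding zf_def ps by (simp add: algebra_simps power2_eq_square)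
  moreover have "u2 t ^ 2 = (pm21 t + \<mu> * pm22 t)^2 * isf t ^ 2"
    by (simp add: u2_def power_mult_distrib)
  ultimately show "u2 t ^ 2 = pm22 t" using iz by (simp add: mult.assoc)
qed

lemma reality_at: assumes t: "t \<in> I"
  shows "rv (D 0 t) (u1 t) (u2 t) \<and>
    D 1 t$1$1 = 2*wfn t*u1 t*cnj (u1 t) \<and> D 1 t$1$2 = 2*wfn t*u1 t*cnj (u2 t) \<and>
    D 1 t$2$1 = 2*wfn t*u2 t*cnj (u1 t) \<and> D 1 t$2$2 = 2*wfn t*u2 t*cnj (u2 t)"
proof -
  have w: "wfn t \<noteq> 0" by (rule wfn_nz[OF t])
  have iw: "complex_of_real (wfn t) * iwc t = 1" using w by (simp add: iwc_def flip: of_real_mult)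
  note us = u_sq[OF t]
  have h0: "cnj (D 0 t$1$1) = D 0 t$1$1" "cnj (D 0 t$2$2) = D 0 t$2$2" "D 0 t$2$1 = cnj (D 0 t$1$2)"
    using entries_D0[OF t] by auto
  have h1: "cnj (D 1 t$1$1) = D 1 t$1$1" "cnj (D 1 t$2$2) = D 1 t$2$2" "D 1 t$2$1 = cnj (D 1 t$1$2)"
    using entries_D1[OF t] by auto
  have key: "complex_of_real (2 * wfn t) * (\<i>/2 * iwc t * z) = \<i> * z" for z
    using iw by (simp add: algebra_simps)
  have P11: "2*wfn t*u1 t^2 = \<i>*(D 1 t$1$1 * D 0 t$1$2 - D 1 t$1$2 * D 0 t$1$1)"
    unfolding us pm11_def by (rule key)
  have P12: "2*wfn t*(u1 t * u2 t) = \<i>*(D 1 t$1$1 * D 0 t$2$2 - D 1 t$1$2 * D 0 t$2$1)"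
    unfolding us pm12_def by (rule key)
  have P21: "2*wfn t*(u1 t * u2 t) = \<i>*(D 1 t$2$1 * D 0 t$1$2 - D 1 t$2$2 * D 0 t$1$1)"
    unfolding us pm_sym[OF t, symmetric] pm21_def by (rule key)
  have P22: "2*wfn t*u2 t^2 = \<i>*(D 1 t$2$1 * D 0 t$2$2 - D 1 t$2$2 * D 0 t$2$1)"
    unfolding us pm22_def by (rule key)
  have tr: "wfn t * Re (D 1 t$1$1 + D 1 t$2$2) > 0" using wfn_tr[OF t] by (simp add: trf_def)
  from reality_lemma[OF h0 det0'[OF t] h1 P11 P12 P21 P22 tr] show ?thesis
    unfolding rv_def by auto
qed

end


context ncurve2 begin

definition "du1 = dv u1"
definition "du2 = dv u2"
definition "dwc = dv wc"

lemma wc_B2: "wc \<in> alg B2" by (rule alg12[OF wc_B1])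
lemma iwc_B2: "iwc \<in> alg B2" by (rule alg12[OF iwc_B1])

lemma du_alg: "du1 \<in> alg B2" "du2 \<in> alg B2" "dwc \<in> alg B2"
  unfolding du1_def du2_def dwc_def using dv(1) u_alg wc_B2 by auto

lemma du_d: "t \<in> I \<Longrightarrow> (u1 has_vector_derivative du1 t) (at t)"
  "t \<in> I \<Longrightarrow> (u2 has_vector_derivative du2 t) (at t)"
  "t \<in> I \<Longrightarrow> (wc has_vector_derivative dwc t) (at t)"
  unfolding du1_def du2_def dwc_def using dv(2) u_alg wc_B2 by auto

lemma entry_d0: "t \<in> I \<Longrightarrow> ((\<lambda>s. D 0 s $ i $ j) has_vector_derivative D 1 t $ i $ j) (at t)"
  using entry_d[of t 0] by simp
lemma entry_d1: "t \<in> I \<Longrightarrow> ((\<lambda>s. D 1 s $ i $ j) has_vector_derivative D 2 t $ i $ j) (at t)"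
  using entry_d[of t 1] by (simp add: numeral_2_eq_2)

lemma rv_u: "t \<in> I \<Longrightarrow> rv (D 0 t) (u1 t) (u2 t)"
  using reality_at by blast

lemma D1_u: assumes "t \<in> I"
  shows "D 1 t$1$1 = 2*wc t*u1 t*cnj (u1 t)" "D 1 t$1$2 = 2*wc t*u1 t*cnj (u2 t)"
    "D 1 t$2$1 = 2*wc t*u2 t*cnj (u1 t)" "D 1 t$2$2 = 2*wc t*u2 t*cnj (u2 t)"
  using reality_at[OF assms] by (simp_all add: wc_def)

lemma rv_du: assumes t: "t \<in> I" shows "rv (D 0 t) (du1 t) (du2 t)"
proof -
  note r = rv_u[unfolded rv_def]
  have A: "cnj (du1 t) = - \<i> * ((D 0 t$2$1 * du1 t + D 1 t$2$1 * u1 t) - (D 0 t$1$1 * du2 t + D 1 t$1$1 * u2 t))"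
  proof (rule deriv_eq_on[OF openI t])
    show "cnj (u1 s) = - \<i> * (D 0 s$2$1 * u1 s - D 0 s$1$1 * u2 s)" if "s \<in> I" for s
      using r[OF that] by blast
    show "((\<lambda>s. cnj (u1 s)) has_vector_derivative cnj (du1 t)) (at t)"
      by (rule has_vector_derivative_cnj[OF du_d(1)[OF t]])
    show "((\<lambda>s. - \<i> * (D 0 s$2$1 * u1 s - D 0 s$1$1 * u2 s)) has_vector_derivative
       - \<i> * ((D 0 t$2$1 * du1 t + D 1 t$2$1 * u1 t) - (D 0 t$1$1 * du2 t + D 1 t$1$1 * u2 t))) (at t)"
      by (intro has_vector_derivative_mult_right has_vector_derivative_diff has_vector_derivative_mult
          entry_d0 du_d t)
  qed
  have B: "cnj (du2 t) = - \<i> * ((D 0 t$2$2 * du1 t + D 1 t$2$2 * u1 t) - (D 0 t$1$2 * du2 t + D 1 t$1$2 * u2 t))"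
  proof (rule deriv_eq_on[OF openI t])
    show "cnj (u2 s) = - \<i> * (D 0 s$2$2 * u1 s - D 0 s$1$2 * u2 s)" if "s \<in> I" for s
      using r[OF that] by blast
    show "((\<lambda>s. cnj (u2 s)) has_vector_derivative cnj (du2 t)) (at t)"
      by (rule has_vector_derivative_cnj[OF du_d(2)[OF t]])
    show "((\<lambda>s. - \<i> * (D 0 s$2$2 * u1 s - D 0 s$1$2 * u2 s)) has_vector_derivative
       - \<i> * ((D 0 t$2$2 * du1 t + D 1 t$2$2 * u1 t) - (D 0 t$1$2 * du2 t + D 1 t$1$2 * u2 t))) (at t)"
      by (intro has_vector_derivative_mult_right has_vector_derivative_diff has_vector_derivative_mult
          entry_d0 du_d t)
  qed
  note d1 = D1_u[OF t]
  have "D 1 t$2$1 * u1 t - D 1 t$1$1 * u2 t = 0" unfolding d1 by (simp add: algebra_simps)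
  moreover have "D 1 t$2$2 * u1 t - D 1 t$1$2 * u2 t = 0" unfolding d1 by (simp add: algebra_simps)
  ultimately show ?thesis using A B unfolding rv_def by (simp add: algebra_simps)
qed

lemma D2_u: assumes t: "t \<in> I"
  shows "D 2 t$1$1 = (2*dwc t)*u1 t*cnj (u1 t) + (2*wc t)*(du1 t*cnj (u1 t) + u1 t*cnj (du1 t))"
    "D 2 t$1$2 = (2*dwc t)*u1 t*cnj (u2 t) + (2*wc t)*(du1 t*cnj (u2 t) + u1 t*cnj (du2 t))"
    "D 2 t$2$1 = (2*dwc t)*u2 t*cnj (u1 t) + (2*wc t)*(du2 t*cnj (u1 t) + u2 t*cnj (du1 t))"
    "D 2 t$2$2 = (2*dwc t)*u2 t*cnj (u2 t) + (2*wc t)*(du2 t*cnj (u2 t) + u2 t*cnj (du2 t))"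
proof -
  have gen: "D 2 t$i$j = (2*dwc t)*f t*cnj (g t) + (2*wc t)*(df t*cnj (g t) + f t*cnj (dg t))"
    if eq: "\<And>s. s \<in> I \<Longrightarrow> D 1 s$i$j = 2*wc s*f s*cnj (g s)"
      and df: "(f has_vector_derivative df t) (at t)" and dg: "(g has_vector_derivative dg t) (at t)"
    for i j f g df dg
  proof -
    have "D 2 t$i$j = 2*wc t*f t*cnj (dg t) + (2*wc t*df t + 2*dwc t*f t)*cnj (g t)"
    proof (rule deriv_eq_on[OF openI t eq entry_d1[OF t]])
      show "((\<lambda>s. 2*wc s*f s*cnj (g s)) has_vector_derivative
          2*wc t*f t*cnj (dg t) + (2*wc t*df t + 2*dwc t*f t)*cnj (g t)) (at t)"
        using has_vector_derivative_mult[OF has_vector_derivative_mult[OF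
            has_vector_derivative_mult_right[OF du_d(3)[OF t], of 2] df] has_vector_derivative_cnj[OF dg]]
        by simp
    qed
    then show ?thesis by (simp add: algebra_simps)
  qed
  show "D 2 t$1$1 = (2*dwc t)*u1 t*cnj (u1 t) + (2*wc t)*(du1 t*cnj (u1 t) + u1 t*cnj (du1 t))"
    by (rule gen[where f=u1 and g=u1 and df=du1 and dg=du1, OF _ du_d(1)[OF t] du_d(1)[OF t]]) (rule D1_u)
  show "D 2 t$1$2 = (2*dwc t)*u1 t*cnj (u2 t) + (2*wc t)*(du1 t*cnj (u2 t) + u1 t*cnj (du2 t))"
    by (rule gen[where f=u1 and g=u2 and df=du1 and dg=du2, OF _ du_d(1)[OF t] du_d(2)[OF t]]) (rule D1_u)
  show "D 2 t$2$1 = (2*dwc t)*u2 t*cnj (u1 t) + (2*wc t)*(du2 t*cnj (u1 t) + u2 t*cnj (du1 t))"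
    by (rule gen[where f=u2 and g=u1 and df=du2 and dg=du1, OF _ du_d(2)[OF t] du_d(1)[OF t]]) (rule D1_u)
  show "D 2 t$2$2 = (2*dwc t)*u2 t*cnj (u2 t) + (2*wc t)*(du2 t*cnj (u2 t) + u2 t*cnj (du2 t))"
    by (rule gen[where f=u2 and g=u2 and df=du2 and dg=du2, OF _ du_d(2)[OF t] du_d(2)[OF t]]) (rule D1_u)
qed

definition "dd t = du1 t * u2 t - du2 t * u1 t"

lemma dd_real: "t \<in> I \<Longrightarrow> cnj (dd t) = dd t"
  unfolding dd_def by (rule rv_det_real[OF herm det0 rv_du rv_u])

lemma det_D2: assumes t: "t \<in> I" shows "det (D 2 t) = - ((2*wc t)^2) * dd t * cnj (dd t)"
proof -
  have c: "cnj (dd t) = cnj (du1 t) * cnj (u2 t) - cnj (du2 t) * cnj (u1 t)" by (simp add: dd_def)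
  show ?thesis unfolding det_2 D2_u[OF t] c unfolding dd_def by (rule det_rank2)
qed

end


context ncurve2 begin

lemma dd_sq: assumes t: "t \<in> I" shows "dd t * dd t = wc t * wc t"
proof -
  define d where "d = Re (dd t)"
  have r: "dd t = complex_of_real d" unfolding d_def by (rule real_entry[OF dd_real[OF t]])
  have "det (D 2 t) = complex_of_real (-4 * (wfn t)^2 * d^2)"
    using det_D2[OF t] unfolding r wc_def by (simp add: power2_eq_square)
  then have q1: "qf t = (wfn t)^2 * d^2" by (simp add: qf_def)
  have "rr t ^ 2 = qf t" using qf_pos[OF t] by (simp add: rr_def)
  then have q2: "qf t = (wfn t)^2 * (wfn t)^2" using wfn_sq[OF t] by (simp add: power2_eq_square)
  have "(wfn t)^2 * d^2 = (wfn t)^2 * (wfn t)^2" using q1 q2 by simp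
  moreover have "(wfn t)^2 \<noteq> 0" using wfn_nz[OF t] by simp
  ultimately have "d^2 = (wfn t)^2" using mult_left_cancel by blast
  then have "complex_of_real (d*d) = complex_of_real (wfn t * wfn t)" by (simp add: power2_eq_square)
  then show ?thesis unfolding r wc_def by simp
qed

definition "epsf t = dd t * iwc t"

lemma epsf_alg: "epsf \<in> alg B2"
  unfolding epsf_def[abs_def] dd_def[abs_def] by (intro alg_mult alg_diff du_alg u_alg iwc_B2)

lemma epsf_sq: "t \<in> I \<Longrightarrow> epsf t * epsf t = 1"
proof -
  assume t: "t \<in> I"
  have "wc t * iwc t = 1" using wfn_nz[OF t] by (simp add: wc_def iwc_def flip: of_real_mult)
  then have "(dd t * dd t) * (iwc t * iwc t) = 1" unfolding dd_sq[OF t]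
    by (metis mult.assoc mult.left_commute mult_1_right)
  then show ?thesis by (simp add: epsf_def algebra_simps)
qed

lemma eps_exists: "\<exists>e. e \<in> {1, -1} \<and> (\<forall>t\<in>I. epsf t = complex_of_real e)"
proof -
  define de where "de = dv epsf"
  have de: "\<And>t. t \<in> I \<Longrightarrow> (epsf has_vector_derivative de t) (at t)"
    unfolding de_def by (rule dv(2)[OF epsf_alg])
  have de0: "de t = 0" if t: "t \<in> I" for t
  proof -
    have "epsf t * de t + de t * epsf t = 0"
      by (rule deriv_const_on[OF openI t epsf_sq has_vector_derivative_mult[OF de[OF t] de[OF t]]])
    then have "2 * epsf t * de t = 0" by (simp add: algebra_simps)
    moreover have "epsf t \<noteq> 0" using epsf_sq[OF t] by auto
    ultimately show ?thesis by simp
  qed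
  obtain c where c: "\<And>t. t \<in> I \<Longrightarrow> epsf t = c"
  proof (rule has_vector_derivative_zero_constant[OF convexI])
    fix t assume t: "t \<in> I"
    show "(epsf has_vector_derivative 0) (at t within I)"
      using de[OF t] de0[OF t] by (simp add: has_vector_derivative_at_within)
  qed blast
  obtain t0 where t0: "t0 \<in> I" using neI by blast
  have "cnj (epsf t0) = epsf t0"
    using dd_real[OF t0] by (simp add: epsf_def iwc_def)
  then have "epsf t0 = complex_of_real (Re (epsf t0))" by (rule real_entry)
  moreover have "Re (epsf t0) * Re (epsf t0) = 1"
    using epsf_sq[OF t0] calculation by (metis of_real_eq_1_iff of_real_mult)
  ultimately have "Re (epsf t0) \<in> {1, -1}" and "\<forall>t\<in>I. epsf t = complex_of_real (Re (epsf t0))"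
    using c t0 by (auto simp: square_eq_1_iff)
  then show ?thesis by blast
qed

definition "e0 = (SOME e. e \<in> {1, -1} \<and> (\<forall>t\<in>I. epsf t = complex_of_real e))"

lemma e0: "e0 \<in> {1, -1}" "\<And>t. t \<in> I \<Longrightarrow> epsf t = complex_of_real e0"
  using someI_ex[OF eps_exists] unfolding e0_def[symmetric] by auto

lemma e0_sq: "e0 * e0 = 1" using e0(1) by auto

end


context ncurve2 begin

definition "e11 t = complex_of_real e0 * iwc t * du1 t"
definition "e12 t = complex_of_real e0 * iwc t * du2 t"
definition "Gam t = mat2 (e11 t) (u1 t) (e12 t) (u2 t)"

lemma e_alg: "e11 \<in> alg B2" "e12 \<in> alg B2"
  unfolding e11_def[abs_def] e12_def[abs_def] by (intro alg_mult alg_const du_alg iwc_B2)+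

lemma wiw: "t \<in> I \<Longrightarrow> wc t * iwc t = 1"
  using wfn_nz by (simp add: wc_def iwc_def flip: of_real_mult)

lemma det_Gam: assumes t: "t \<in> I" shows "e11 t * u2 t - u1 t * e12 t = 1"
proof -
  have "e11 t * u2 t - u1 t * e12 t = complex_of_real e0 * epsf t"
    by (simp add: e11_def e12_def epsf_def dd_def algebra_simps)
  also have "\<dots> = 1" using e0(2)[OF t] e0_sq by (simp flip: of_real_mult)
  finally show ?thesis .
qed

lemma rv_e: assumes t: "t \<in> I" shows "rv (D 0 t) (e11 t) (e12 t)"
proof -
  have "complex_of_real e0 * iwc t = complex_of_real (e0 * (1 / wfn t))" by (simp add: iwc_def)
  then show ?thesis using rv_scale[OF rv_du[OF t], of "e0 * (1 / wfn t)"]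
    unfolding e11_def e12_def by (simp add: mult.assoc)
qed

lemma frame_at: "t \<in> I \<Longrightarrow> Gam t ** J_mat ** adj (Gam t) = D 0 t"
  unfolding Gam_def by (rule frame_lemma[OF herm det0 rv_e rv_u det_Gam])

lemma du_e: assumes t: "t \<in> I"
  shows "du1 t = wc t * complex_of_real e0 * e11 t" "du2 t = wc t * complex_of_real e0 * e12 t"
proof -
  have k: "wc t * complex_of_real e0 * (complex_of_real e0 * iwc t * z) = z" for z
  proof -
    have "wc t * complex_of_real e0 * (complex_of_real e0 * iwc t * z) = (wc t * iwc t) * complex_of_real (e0*e0) * z"
      by (simp add: algebra_simps)
    then show ?thesis using wiw[OF t] e0_sq by simp
  qed
  show "du1 t = wc t * complex_of_real e0 * e11 t" unfolding e11_def k ..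
  show "du2 t = wc t * complex_of_real e0 * e12 t" unfolding e12_def k ..
qed

definition "de11 = dv e11"
definition "de12 = dv e12"

lemma de_alg: "de11 \<in> alg B2" "de12 \<in> alg B2"
  unfolding de11_def de12_def using dv(1) e_alg by auto
lemma de_d: "t \<in> I \<Longrightarrow> (e11 has_vector_derivative de11 t) (at t)"
  "t \<in> I \<Longrightarrow> (e12 has_vector_derivative de12 t) (at t)"
  unfolding de11_def de12_def using dv(2) e_alg by auto

lemma de_rel: assumes t: "t \<in> I" shows "de11 t * u2 t - u1 t * de12 t = 0"
proof -
  have "(e11 t * du2 t + de11 t * u2 t) - (u1 t * de12 t + du1 t * e12 t) = 0"
    by (rule deriv_const_on[OF openI t det_Gam has_vector_derivative_diff[OF
          has_vector_derivative_mult[OF de_d(1)[OF t] du_d(2)[OF t]]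
          has_vector_derivative_mult[OF du_d(1)[OF t] de_d(2)[OF t]]]])
  moreover have "e11 t * du2 t - du1 t * e12 t = 0" unfolding du_e[OF t] by (simp add: algebra_simps)
  ultimately show ?thesis by (simp add: algebra_simps)
qed

definition "bb t = e11 t * de12 t - e12 t * de11 t"

lemma bb_alg: "bb \<in> alg B2"
  unfolding bb_def[abs_def] by (intro alg_mult alg_diff e_alg de_alg)

lemma de_b: assumes t: "t \<in> I" shows "de11 t = bb t * u1 t" "de12 t = bb t * u2 t"
  using det_Gam[OF t] de_rel[OF t] unfolding bb_def by algebra+

lemma u_nz: "t \<in> I \<Longrightarrow> u1 t \<noteq> 0 \<or> u2 t \<noteq> 0"
  using u_sq pm_nz by (metis mult_zero_left power_zero_numeral zero_neq_numeral)

end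


context ncurve2 begin

lemma cnj_wc: "cnj (wc t) = wc t" by (simp add: wc_def)

lemma im_eq: "\<i> * (cnj b - b) = complex_of_real (2 * Im b)"
  by (simp add: complex_eq_iff)

lemma Im_bb: assumes t: "t \<in> I" shows "Im (bb t) = wfn t"
proof -
  have gen: "(complex_of_real (2 * Im (bb t)) - 2 * wc t) * (f t * cnj (f t)) = 0"
    if eq: "\<And>s. s \<in> I \<Longrightarrow> D 0 s $i$i = \<i> * (f s * cnj (g s)) - \<i> * (g s * cnj (f s))"
      and df: "(f has_vector_derivative df) (at t)" and dg: "(g has_vector_derivative dg) (at t)"
      and dfe: "df = wc t * complex_of_real e0 * g t" and dge: "dg = bb t * f t"
      and d1: "D 1 t $i$i = 2 * wc t * f t * cnj (f t)"
    for i f g df dg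
  proof -
    have "D 1 t $i$i = \<i> * (f t * cnj dg + df * cnj (g t)) - \<i> * (g t * cnj df + dg * cnj (f t))"
    proof (rule deriv_eq_on[OF openI t eq entry_d0[OF t]])
      show "((\<lambda>s. \<i> * (f s * cnj (g s)) - \<i> * (g s * cnj (f s))) has_vector_derivative
          \<i> * (f t * cnj dg + df * cnj (g t)) - \<i> * (g t * cnj df + dg * cnj (f t))) (at t)"
        by (intro has_vector_derivative_diff has_vector_derivative_mult_right has_vector_derivative_mult
            has_vector_derivative_cnj df dg)
    qed
    also have "\<dots> = \<i> * (cnj (bb t) - bb t) * (f t * cnj (f t))"
      unfolding dfe dge by (simp add: cnj_wc algebra_simps)
    finally have "2 * wc t * f t * cnj (f t) = complex_of_real (2 * Im (bb t)) * (f t * cnj (f t))"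
      unfolding d1 im_eq .
    then show ?thesis by (simp add: algebra_simps) metis
  qed
  have fr: "\<And>s. s \<in> I \<Longrightarrow> Gam s ** J_mat ** adj (Gam s) = D 0 s" by (rule frame_at)
  have eq1: "D 0 s $1$1 = \<i> * (u1 s * cnj (e11 s)) - \<i> * (e11 s * cnj (u1 s))" if "s \<in> I" for s
    using arg_cong[OF fr[OF that], of "\<lambda>M. M$1$1"]
    by (simp add: Gam_def J_mat_def adj_mat2 mat2_mult algebra_simps)
  have eq2: "D 0 s $2$2 = \<i> * (u2 s * cnj (e12 s)) - \<i> * (e12 s * cnj (u2 s))" if "s \<in> I" for s
    using arg_cong[OF fr[OF that], of "\<lambda>M. M$2$2"]
    by (simp add: Gam_def J_mat_def adj_mat2 mat2_mult algebra_simps)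
  have z1: "(complex_of_real (2 * Im (bb t)) - 2 * wc t) * (u1 t * cnj (u1 t)) = 0"
    by (rule gen[OF eq1 du_d(1)[OF t] de_d(1)[OF t] du_e(1)[OF t] de_b(1)[OF t] D1_u(1)[OF t]])
  have z2: "(complex_of_real (2 * Im (bb t)) - 2 * wc t) * (u2 t * cnj (u2 t)) = 0"
    by (rule gen[OF eq2 du_d(2)[OF t] de_d(2)[OF t] du_e(2)[OF t] de_b(2)[OF t] D1_u(4)[OF t]])
  have "complex_of_real (2 * Im (bb t)) - 2 * wc t = 0"
    using z1 z2 u_nz[OF t] by auto
  then show ?thesis by (simp add: wc_def complex_eq_iff)
qed

end


context ncurve2 begin

lemma Gam_d: "t \<in> I \<Longrightarrow> (Gam has_vector_derivative mat2 (de11 t) (du1 t) (de12 t) (du2 t)) (at t)"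
  unfolding Gam_def[abs_def] by (intro has_vector_derivative_mat2 de_d du_d)

definition "kf t = Re (bb t) / wfn t"

lemma existence: "\<exists>\<Gamma> \<epsilon> w k. canonical_frame_data I (D 0) \<Gamma> \<epsilon> w k"
proof (intro exI)
  show "canonical_frame_data I (D 0) Gam e0 wfn kf"
    unfolding canonical_frame_data_def frame_field_def
  proof (intro conjI ballI)
    show "smooth_on I Gam"
      unfolding Gam_def[abs_def] by (rule smooth_mat2[OF B2_closed e_alg(1) u_alg(1) e_alg(2) u_alg(2)])
    show "Gam t \<in> SL2C" if "t \<in> I" for t
      using det_Gam[OF that] by (simp add: SL2C_def Gam_def det_mat2)
    show "D 0 t = Gam t ** J_mat ** adj (Gam t)" if "t \<in> I" for t using frame_at[OF that] by simp
    show "e0 \<in> {1, -1}" by (rule e0(1))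
    have "smooth_on I (\<lambda>t. Re (wc t))" by (rule smooth_Re[OF deriv_closed_smooth[OF B2_closed wc_B2]])
    then show "smooth_on I wfn" by (simp add: wc_def)
    show "wfn t \<noteq> 0" if "t \<in> I" for t by (rule wfn_nz[OF that])
    have kc: "(\<lambda>t. (bb t + cnj (bb t)) * (1/2) * iwc t) \<in> alg B2"
      by (intro alg_mult alg_add alg_cnj alg_const bb_alg iwc_B2)
    have "smooth_on I (\<lambda>t. Re ((bb t + cnj (bb t)) * (1/2) * iwc t))"
      by (rule smooth_Re[OF deriv_closed_smooth[OF B2_closed kc]])
    moreover have "(\<lambda>t. Re ((bb t + cnj (bb t)) * (1/2) * iwc t)) = kf"
      by (rule ext) (simp add: kf_def iwc_def complex_add_cnj)
    ultimately show "smooth_on I kf" by simp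
    fix t assume t: "t \<in> I"
    have vd: "vector_derivative Gam (at t) = mat2 (de11 t) (du1 t) (de12 t) (du2 t)"
      by (rule vector_derivative_at[OF Gam_d[OF t]])
    have mi: "matrix_inv (Gam t) = mat2 (u2 t) (- u1 t) (- e12 t) (e11 t)"
      unfolding Gam_def by (rule matrix_inv_mat2[OF det_Gam[OF t]])
    have w: "wfn t \<noteq> 0" by (rule wfn_nz[OF t])
    have "matrix_inv (Gam t) ** vector_derivative Gam (at t)
        = mat2 (u2 t * de11 t - u1 t * de12 t) (u2 t * du1 t - u1 t * du2 t)
               (e11 t * de12 t - e12 t * de11 t) (e11 t * du2 t - e12 t * du1 t)"
      unfolding mi vd mat2_mult by (simp add: algebra_simps)
    also have "\<dots> = mat2 0 (wc t * complex_of_real e0) (bb t) 0"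
    proof -
      have a: "u2 t * de11 t - u1 t * de12 t = 0" by (simp add: de_b[OF t] algebra_simps)
      have "u2 t * du1 t - u1 t * du2 t = wc t * complex_of_real e0 * (e11 t * u2 t - u1 t * e12 t)"
        by (simp add: du_e[OF t] algebra_simps)
      then have b: "u2 t * du1 t - u1 t * du2 t = wc t * complex_of_real e0" using det_Gam[OF t] by simp
      have c: "e11 t * du2 t - e12 t * du1 t = 0" by (simp add: du_e[OF t] algebra_simps)
      show ?thesis unfolding mat2_eq using a b c by (simp add: bb_def)
    qed
    also have "\<dots> = wfn t *\<^sub>R mat2 0 (complex_of_real e0) (complex_of_real (kf t) + \<i>) 0"
    proof -
      have "complex_of_real (wfn t) * (complex_of_real (kf t) + \<i>) = bb t"
        using Im_bb[OF t] w by (simp add: kf_def complex_eq_iff)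
      then show ?thesis unfolding mat2_scaleR mat2_eq by (simp add: scaleR_conv_of_real wc_def)
    qed
    finally show "matrix_inv (Gam t) ** vector_derivative Gam (at t)
        = wfn t *\<^sub>R mat2 0 (complex_of_real e0) (complex_of_real (kf t) + \<i>) 0" .
  qed
qed

end


lemma existence_main:
  assumes oI: "open_interval I" and nc: "null_curve_no_flex I \<gamma>"
  shows "\<exists>\<Gamma> \<epsilon> w k. canonical_frame_data I \<gamma> \<Gamma> \<epsilon> w k"
proof -
  have opI: "open I" using oI by (simp add: open_interval_def)
  obtain D where D0: "D 0 = \<gamma>" and Dd: "\<And>n t. t \<in> I \<Longrightarrow> (D n has_vector_derivative D (Suc n) t) (at t)"
    using nc unfolding null_curve_no_flex_def smooth_on_def by blast
  have dS: "\<And>t. t \<in> I \<Longrightarrow> \<gamma> t \<in> deSitter"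
    and nl: "\<And>t. t \<in> I \<Longrightarrow> lor (vector_derivative \<gamma> (at t)) (vector_derivative \<gamma> (at t)) = 0"
    and nf: "\<And>t a b. t \<in> I \<Longrightarrow> a *\<^sub>R vector_derivative \<gamma> (at t) + b *\<^sub>R cov_acc \<gamma> t = 0 \<Longrightarrow> a = 0 \<and> b = 0"
    using nc unfolding null_curve_no_flex_def by blast+
  have vd1: "vector_derivative \<gamma> (at t) = D 1 t" if "t \<in> I" for t
    using vector_derivative_at[OF Dd[OF that, of 0]] D0 by simp
  have cov: "cov_acc \<gamma> t = D 2 t - lor (D 2 t) (D 0 t) *\<^sub>R D 0 t" if t: "t \<in> I" for t
  proof -
    have "((\<lambda>s. vector_derivative \<gamma> (at s)) has_vector_derivative D 2 t) (at t)"
    proof (rule has_vector_derivative_transform_within_open[OF _ opI t])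
      show "(D 1 has_vector_derivative D 2 t) (at t)" using Dd[OF t, of 1] by (simp add: numeral_2_eq_2)
      show "D 1 s = vector_derivative \<gamma> (at s)" if "s \<in> I" for s using vd1[OF that] by simp
    qed
    then have "vector_derivative (\<lambda>s. vector_derivative \<gamma> (at s)) (at t) = D 2 t"
      by (rule vector_derivative_at)
    then show ?thesis unfolding cov_acc_def D0 by (simp add: Let_def)
  qed
  interpret nc: ncurve I D
  proof
    show "open_interval I" by (rule oI)
    show "\<And>n t. t \<in> I \<Longrightarrow> (D n has_vector_derivative D (Suc n) t) (at t)" by (rule Dd)
    show "hermitian (D 0 t)" if "t \<in> I" for t using dS[OF that] D0 by (simp add: deSitter_def)
    show "det (D 0 t) = -1" if "t \<in> I" for t using dS[OF that] D0 by (simp add: deSitter_def)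
    show "lor (D 1 t) (D 1 t) = 0" if "t \<in> I" for t using nl[OF that] vd1[OF that] by simp
    show "a = 0 \<and> b = 0" if "t \<in> I" "a *\<^sub>R D 1 t + b *\<^sub>R (D 2 t - lor (D 2 t) (D 0 t) *\<^sub>R D 0 t) = 0" for t a b
      using nf[OF that(1), of a b] that(2) vd1[OF that(1)] cov[OF that(1)] by simp
  qed
  obtain \<mu> where mu: "\<And>t. t \<in> I \<Longrightarrow> nc.pm11 t + 2*\<mu>*nc.pm12 t + \<mu>^2 * nc.pm22 t \<noteq> 0"
    using nc.mu_exists by blast
  have zalg: "(\<lambda>t. nc.pm11 t + 2*\<mu>*nc.pm12 t + \<mu>^2 * nc.pm22 t) \<in> alg nc.B1"
    by (intro alg_add alg_mult alg_const alg_power nc.pm_alg)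
  have zc: "continuous_on I (\<lambda>t. nc.pm11 t + 2*\<mu>*nc.pm12 t + \<mu>^2 * nc.pm22 t)"
    by (intro continuous_at_imp_continuous_on ballI nc.alg1_cont[OF zalg])
  have ctI: "contractible I" by (rule convex_imp_contractible[OF nc.convexI])
  obtain s where sc: "continuous_on I s"
    and ss: "\<And>t. t \<in> I \<Longrightarrow> nc.pm11 t + 2*\<mu>*nc.pm12 t + \<mu>^2 * nc.pm22 t = (s t)^2"
  proof -
    from continuous_sqrt_on_contractible[OF zc ctI mu]
    obtain g where "continuous_on I g" "\<And>x. x \<in> I \<Longrightarrow> nc.pm11 x + 2*\<mu>*nc.pm12 x + \<mu>^2 * nc.pm22 x = (g x)^2"
      by blast
    then show ?thesis using that by blast
  qed
  interpret nc2: ncurve2 I D \<mu> s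
  proof
    show "continuous_on I s" by (rule sc)
    show "s t ^ 2 = nc.pm11 t + 2*\<mu>*nc.pm12 t + \<mu>^2 * nc.pm22 t" if "t \<in> I" for t using ss[OF that] by simp
    show "nc.pm11 t + 2*\<mu>*nc.pm12 t + \<mu>^2 * nc.pm22 t \<noteq> 0" if "t \<in> I" for t by (rule mu[OF that])
  qed
  show ?thesis using nc2.existence D0 by simp
qed


lemma frame_rv:
  assumes d1: "a*d - b*c = 1" and X: "X = mat2 a b c d ** J_mat ** adj (mat2 a b c d)"
  shows "hermitian X" "det X = -1" "rv X a c" "rv X b d"
proof -
  have ii: "\<i>*\<i> = (-1::complex)" by simp
  have cd1: "cnj a * cnj d - cnj b * cnj c = 1" using arg_cong[OF d1, of cnj] by simp
  have Xe: "X = mat2 (\<i>*(b*cnj a) - \<i>*(a*cnj b)) (\<i>*(b*cnj c) - \<i>*(a*cnj d))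
                     (\<i>*(d*cnj a) - \<i>*(c*cnj b)) (\<i>*(d*cnj c) - \<i>*(c*cnj d))"
    unfolding X J_mat_def adj_mat2 mat2_mult by (simp add: mat2_eq algebra_simps)
  show "hermitian X" unfolding hermitian_iff Xe by (simp add: algebra_simps)
  show "det X = -1" unfolding Xe det_mat2 using d1 cd1 ii by algebra
  show "rv X a c" unfolding rv_def Xe mat2_nth using d1 cd1 ii by (intro conjI; algebra)
  show "rv X b d" unfolding rv_def Xe mat2_nth using d1 cd1 ii by (intro conjI; algebra)
qed


lemma frame_deriv:
  assumes c: "canonical_frame_data I \<gamma> G \<epsilon> w k" and oI: "open_interval I" and t: "t \<in> I"
  shows "(G has_vector_derivative
     mat2 (G t$1$2 * (complex_of_real (w t) * (complex_of_real (k t) + \<i>))) (G t$1$1 * (complex_of_real (w t) * complex_of_real \<epsilon>))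
          (G t$2$2 * (complex_of_real (w t) * (complex_of_real (k t) + \<i>))) (G t$2$1 * (complex_of_real (w t) * complex_of_real \<epsilon>))) (at t)"
proof -
  have sm: "smooth_on I G" and sl: "G t \<in> SL2C"
    and eq: "matrix_inv (G t) ** vector_derivative G (at t) = w t *\<^sub>R mat2 0 (complex_of_real \<epsilon>) (complex_of_real (k t) + \<i>) 0"
    using c t unfolding canonical_frame_data_def frame_field_def by auto
  obtain D where D0: "D 0 = G" and Dd: "\<And>n t. t \<in> I \<Longrightarrow> (D n has_vector_derivative D (Suc n) t) (at t)"
    using sm unfolding smooth_on_def by blast
  have gd: "(G has_vector_derivative D 1 t) (at t)" using Dd[OF t, of 0] D0 by simp
  have vd: "vector_derivative G (at t) = D 1 t" by (rule vector_derivative_at[OF gd])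
  define a b c' d where "a = G t$1$1" "b = G t$1$2" "c' = G t$2$1" "d = G t$2$2"
  have Ge: "G t = mat2 a b c' d" unfolding a_b_c'_d_def by (rule mat2_eta)
  have dt: "a*d - b*c' = 1" using sl unfolding SL2C_def Ge by (simp add: det_mat2)
  have mi: "matrix_inv (G t) = mat2 d (-b) (-c') a" unfolding Ge by (rule matrix_inv_mat2[OF dt])
  have one: "G t ** mat2 d (-b) (-c') a = mat 1"
    unfolding Ge mat2_mult mat2_one using dt by (simp add: mat2_eq algebra_simps)
  have "D 1 t = G t ** (matrix_inv (G t) ** vector_derivative G (at t))"
    unfolding mi matrix_mul_assoc one vd by (simp add: matrix_mul_lid)
  also have "\<dots> = mat2 (b * (complex_of_real (w t) * (complex_of_real (k t) + \<i>))) (a * (complex_of_real (w t) * complex_of_real \<epsilon>))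
          (d * (complex_of_real (w t) * (complex_of_real (k t) + \<i>))) (c' * (complex_of_real (w t) * complex_of_real \<epsilon>))"
    unfolding eq unfolding Ge mat2_scaleR mat2_mult by (simp add: scaleR_conv_of_real)
  finally show ?thesis using gd unfolding a_b_c'_d_def by simp
qed


lemma sign_lemma:
  fixes w1 w2 e1 e2 y1 y2 :: real
  assumes e: "e1 \<in> {1,-1}" "e2 \<in> {1,-1}" and w: "w1 \<noteq> 0" "w2 \<noteq> 0"
    and h1: "w1*y1 = w2*y2" and h2: "w2*e2*y1 = w1*e1*y2" and h3: "y1*y2 = 1"
  shows "y1 = y2 \<and> y1*y1 = 1"
proof -
  have y1: "y1 \<noteq> 0" using h3 by auto
  have y2: "y2 = w1*y1/w2" using h1 w by (simp add: field_simps)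
  have "w2*e2*y1*w2 = w1*e1*(w1*y1)" using h2 unfolding y2 using w by (simp add: field_simps)
  then have "(w2*w2*e2 - w1*w1*e1) * y1 = 0" by (simp add: algebra_simps)
  then have q: "w2*w2*e2 = w1*w1*e1" using y1 by simp
  have p1: "w1*w1 > 0" "w2*w2 > 0" using w by (metis not_real_square_gt_zero)+
  have ee: "e1 = e2"
  proof (rule ccontr)
    assume "e1 \<noteq> e2"
    then have "(e1 = 1 \<and> e2 = -1) \<or> (e1 = -1 \<and> e2 = 1)" using e by auto
    then show False using q p1 by auto
  qed
  then have ww: "w2*w2 = w1*w1" using q e by auto
  have "y1*y1*w1 = w2" using h3 unfolding y2 using w by (simp add: field_simps)
  moreover have "w2 = w1 \<or> w2 = -w1" using ww by (metis minus_mult_minus square_eq_iff)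
  moreover have "y1*y1 > 0" using y1 by (metis not_real_square_gt_zero)
  ultimately have "w2 = w1"
  proof -
    assume a: "y1*y1*w1 = w2" "w2 = w1 \<or> w2 = -w1" "y1*y1 > 0"
    show "w2 = w1"
    proof (rule ccontr)
      assume "w2 \<noteq> w1"
      then have "w2 = -w1" using a(2) by blast
      then have "(y1*y1 + 1) * w1 = 0" using a(1) by (simp add: algebra_simps)
      then show False using w a(3) by simp
    qed
  qed
  then show ?thesis using h1 \<open>y1*y1*w1 = w2\<close> w by auto
qed


locale twof =
  fixes I :: "real set" and \<gamma> G H :: "real \<Rightarrow> cmat2"
    and \<epsilon>1 \<epsilon>2 :: real and w1 k1 w2 k2 :: "real \<Rightarrow> real"
  assumes oI: "open_interval I"
    and c1: "canonical_frame_data I \<gamma> G \<epsilon>1 w1 k1"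
    and c2: "canonical_frame_data I \<gamma> H \<epsilon>2 w2 k2"
begin

lemma openI: "open I" and convexI: "convex I"
  using oI unfolding open_interval_def by (auto simp: is_interval_convex)

definition "a t = G t$1$1"
definition "b t = G t$1$2"
definition "c t = G t$2$1"
definition "d t = G t$2$2"
definition "p t = H t$1$1"
definition "q t = H t$1$2"
definition "r t = H t$2$1"
definition "s t = H t$2$2"
definition "W1 t = complex_of_real (w1 t) * (complex_of_real (k1 t) + \<i>)"
definition "W2 t = complex_of_real (w2 t) * (complex_of_real (k2 t) + \<i>)"
definition "E1 t = complex_of_real (w1 t) * complex_of_real \<epsilon>1"
definition "E2 t = complex_of_real (w2 t) * complex_of_real \<epsilon>2"

lemma Gd: "t \<in> I \<Longrightarrow> (G has_vector_derivative mat2 (b t * W1 t) (a t * E1 t) (d t * W1 t) (c t * E1 t)) (at t)"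
  using frame_deriv[OF c1 oI] unfolding a_def b_def c_def d_def W1_def E1_def by blast
lemma Hd: "t \<in> I \<Longrightarrow> (H has_vector_derivative mat2 (q t * W2 t) (p t * E2 t) (s t * W2 t) (r t * E2 t)) (at t)"
  using frame_deriv[OF c2 oI] unfolding p_def q_def r_def s_def W2_def E2_def by blast

lemma ed: assumes t: "t \<in> I"
  shows "(a has_vector_derivative b t * W1 t) (at t)" "(b has_vector_derivative a t * E1 t) (at t)"
    "(c has_vector_derivative d t * W1 t) (at t)" "(d has_vector_derivative c t * E1 t) (at t)"
    "(p has_vector_derivative q t * W2 t) (at t)" "(q has_vector_derivative p t * E2 t) (at t)"
    "(r has_vector_derivative s t * W2 t) (at t)" "(s has_vector_derivative r t * E2 t) (at t)"
proof -
  note g = has_vector_derivative_entry[OF Gd[OF t]] and h = has_vector_derivative_entry[OF Hd[OF t]]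
  show "(a has_vector_derivative b t * W1 t) (at t)" using g[where i=1 and j=1] unfolding a_def[abs_def] b_def by simp
  show "(b has_vector_derivative a t * E1 t) (at t)" using g[where i=1 and j=2] unfolding b_def[abs_def] a_def by simp
  show "(c has_vector_derivative d t * W1 t) (at t)" using g[where i=2 and j=1] unfolding c_def[abs_def] d_def by simp
  show "(d has_vector_derivative c t * E1 t) (at t)" using g[where i=2 and j=2] unfolding d_def[abs_def] c_def by simp
  show "(p has_vector_derivative q t * W2 t) (at t)" using h[where i=1 and j=1] unfolding p_def[abs_def] q_def by simp
  show "(q has_vector_derivative p t * E2 t) (at t)" using h[where i=1 and j=2] unfolding q_def[abs_def] p_def by simp
  show "(r has_vector_derivative s t * W2 t) (at t)" using h[where i=2 and j=1] unfolding r_def[abs_def] s_def by simp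
  show "(s has_vector_derivative r t * E2 t) (at t)" using h[where i=2 and j=2] unfolding s_def[abs_def] r_def by simp
qed

lemma dets: assumes t: "t \<in> I" shows "a t * d t - b t * c t = 1" "p t * s t - q t * r t = 1"
proof -
  have "G t \<in> SL2C" "H t \<in> SL2C" using c1 c2 t unfolding canonical_frame_data_def frame_field_def by auto
  then show "a t * d t - b t * c t = 1" "p t * s t - q t * r t = 1"
    unfolding SL2C_def a_def b_def c_def d_def p_def q_def r_def s_def by (simp_all add: det_2)
qed

lemma rvs: assumes t: "t \<in> I"
  shows "hermitian (\<gamma> t)" "det (\<gamma> t) = -1" "rv (\<gamma> t) (a t) (c t)" "rv (\<gamma> t) (b t) (d t)"
    "rv (\<gamma> t) (p t) (r t)" "rv (\<gamma> t) (q t) (s t)"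
proof -
  have g1: "\<gamma> t = G t ** J_mat ** adj (G t)" and g2: "\<gamma> t = H t ** J_mat ** adj (H t)"
    using c1 c2 t unfolding canonical_frame_data_def frame_field_def by auto
  have G: "G t = mat2 (a t) (b t) (c t) (d t)" unfolding a_def b_def c_def d_def by (rule mat2_eta)
  have H: "H t = mat2 (p t) (q t) (r t) (s t)" unfolding p_def q_def r_def s_def by (rule mat2_eta)
  note f1 = frame_rv[OF dets(1)[OF t] g1[unfolded G]] and f2 = frame_rv[OF dets(2)[OF t] g2[unfolded H]]
  show "hermitian (\<gamma> t)" "det (\<gamma> t) = -1" "rv (\<gamma> t) (a t) (c t)" "rv (\<gamma> t) (b t) (d t)"
    "rv (\<gamma> t) (p t) (r t)" "rv (\<gamma> t) (q t) (s t)" using f1 f2 by auto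
qed

definition "y11 t = p t * d t - r t * b t"
definition "y21 t = a t * r t - c t * p t"
definition "y12 t = q t * d t - s t * b t"
definition "y22 t = a t * s t - c t * q t"

lemma y_real: assumes t: "t \<in> I"
  shows "cnj (y11 t) = y11 t" "cnj (y21 t) = y21 t" "cnj (y12 t) = y12 t" "cnj (y22 t) = y22 t"
  unfolding y11_def y21_def y12_def y22_def
  by (rule rv_det_real[OF rvs(1,2)[OF t] rvs(5)[OF t] rvs(4)[OF t]],
      rule rv_det_real[OF rvs(1,2)[OF t] rvs(3)[OF t] rvs(5)[OF t]],
      rule rv_det_real[OF rvs(1,2)[OF t] rvs(6)[OF t] rvs(4)[OF t]],
      rule rv_det_real[OF rvs(1,2)[OF t] rvs(3)[OF t] rvs(6)[OF t]])

lemma cramer: assumes t: "t \<in> I"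
  shows "p t = y11 t * a t + y21 t * b t" "r t = y11 t * c t + y21 t * d t"
    "q t = y12 t * a t + y22 t * b t" "s t = y12 t * c t + y22 t * d t"
  unfolding y11_def y21_def y12_def y22_def using dets[OF t] by algebra+

lemma detY: assumes t: "t \<in> I" shows "y11 t * y22 t - y12 t * y21 t = 1"
  unfolding y11_def y21_def y12_def y22_def using dets[OF t] by algebra

lemma yd: assumes t: "t \<in> I"
  shows "(y11 has_vector_derivative W2 t * y12 t - E1 t * y21 t) (at t)"
    "(y21 has_vector_derivative W2 t * y22 t - W1 t * y11 t) (at t)"
    "(y12 has_vector_derivative E2 t * y11 t - E1 t * y22 t) (at t)"
    "(y22 has_vector_derivative E2 t * y21 t - W1 t * y12 t) (at t)"
proof -
  note e = ed[OF t]
  show "(y11 has_vector_derivative W2 t * y12 t - E1 t * y21 t) (at t)"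
    unfolding y11_def[abs_def]
    using has_vector_derivative_diff[OF has_vector_derivative_mult[OF e(5) e(4)] has_vector_derivative_mult[OF e(7) e(2)]]
    by (simp add: y12_def y21_def algebra_simps)
  show "(y21 has_vector_derivative W2 t * y22 t - W1 t * y11 t) (at t)"
    unfolding y21_def[abs_def]
    using has_vector_derivative_diff[OF has_vector_derivative_mult[OF e(1) e(7)] has_vector_derivative_mult[OF e(3) e(5)]]
    by (simp add: y22_def y11_def algebra_simps)
  show "(y12 has_vector_derivative E2 t * y11 t - E1 t * y22 t) (at t)"
    unfolding y12_def[abs_def]
    using has_vector_derivative_diff[OF has_vector_derivative_mult[OF e(6) e(4)] has_vector_derivative_mult[OF e(8) e(2)]]
    by (simp add: y11_def y22_def algebra_simps)
  show "(y22 has_vector_derivative E2 t * y21 t - W1 t * y12 t) (at t)"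
    unfolding y22_def[abs_def]
    using has_vector_derivative_diff[OF has_vector_derivative_mult[OF e(1) e(8)] has_vector_derivative_mult[OF e(3) e(6)]]
    by (simp add: y21_def y12_def algebra_simps)
qed

end


context twof begin

lemma real_deriv: assumes t: "t \<in> I" and re: "\<And>s. s \<in> I \<Longrightarrow> cnj (f s) = f s"
  and fd: "(f has_vector_derivative f') (at t)" shows "cnj f' = f'"
  by (rule deriv_eq_on[OF openI t re has_vector_derivative_cnj[OF fd] fd])

lemma W_im: "W1 t - cnj (W1 t) = 2 * \<i> * complex_of_real (w1 t)" "W2 t - cnj (W2 t) = 2 * \<i> * complex_of_real (w2 t)"
  by (simp_all add: W1_def W2_def complex_eq_iff)

lemma w_nz: "t \<in> I \<Longrightarrow> w1 t \<noteq> 0" "t \<in> I \<Longrightarrow> w2 t \<noteq> 0"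
  using c1 c2 unfolding canonical_frame_data_def by auto

lemma eps: "\<epsilon>1 \<in> {1,-1}" "\<epsilon>2 \<in> {1,-1}"
  using c1 c2 unfolding canonical_frame_data_def by auto

lemma y12_0: assumes t: "t \<in> I" shows "y12 t = 0"
proof -
  have "cnj (E2 t * y21 t - W1 t * y12 t) = E2 t * y21 t - W1 t * y12 t"
    by (rule real_deriv[OF t y_real(4) yd(4)[OF t]])
  then have "(W1 t - cnj (W1 t)) * y12 t = 0"
    using y_real[OF t] by (simp add: E2_def algebra_simps)
  then show ?thesis unfolding W_im using w_nz[OF t] by simp
qed

lemma rel1: assumes t: "t \<in> I" shows "w2 t * Re (y22 t) = w1 t * Re (y11 t)"
proof -
  have "cnj (W2 t * y22 t - W1 t * y11 t) = W2 t * y22 t - W1 t * y11 t"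
    by (rule real_deriv[OF t y_real(2) yd(2)[OF t]])
  then have "(W2 t - cnj (W2 t)) * y22 t - (W1 t - cnj (W1 t)) * y11 t = 0"
    using y_real[OF t] by (simp add: algebra_simps)
  then have "2 * \<i> * (complex_of_real (w2 t) * y22 t - complex_of_real (w1 t) * y11 t) = 0"
    unfolding W_im by (simp add: algebra_simps)
  then have "complex_of_real (w2 t) * y22 t = complex_of_real (w1 t) * y11 t" by simp
  from arg_cong[OF this, of Re] show ?thesis by simp
qed

lemma rel2: assumes t: "t \<in> I" shows "w2 t * \<epsilon>2 * Re (y11 t) = w1 t * \<epsilon>1 * Re (y22 t)"
proof -
  have "E2 t * y11 t - E1 t * y22 t = 0"
    by (rule deriv_const_on[OF openI t y12_0 yd(3)[OF t]])
  then have "E2 t * y11 t = E1 t * y22 t" by simp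
  then have "Re (E2 t * y11 t) = Re (E1 t * y22 t)" by simp
  then show ?thesis by (simp add: E1_def E2_def)
qed

lemma yreal_of: "t \<in> I \<Longrightarrow> y11 t = complex_of_real (Re (y11 t))" "t \<in> I \<Longrightarrow> y22 t = complex_of_real (Re (y22 t))"
  using y_real real_entry by blast+

lemma rel3: assumes t: "t \<in> I" shows "Re (y11 t) * Re (y22 t) = 1"
proof -
  have "y11 t * y22 t = 1" using detY[OF t] y12_0[OF t] by simp
  then have "complex_of_real (Re (y11 t) * Re (y22 t)) = 1"
    using yreal_of[OF t] by (metis of_real_mult)
  then show ?thesis by (simp only: of_real_eq_1_iff)
qed

lemma y_diag: assumes t: "t \<in> I" shows "y22 t = y11 t" "y11 t * y11 t = 1"
proof -
  have "Re (y11 t) = Re (y22 t) \<and> Re (y11 t) * Re (y11 t) = 1"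
    by (rule sign_lemma[OF eps(1) eps(2) w_nz(1)[OF t] w_nz(2)[OF t]])
       (use rel1[OF t] rel2[OF t] rel3[OF t] in \<open>simp_all add: algebra_simps\<close>)
  then show "y22 t = y11 t" "y11 t * y11 t = 1" using yreal_of[OF t]
    by (metis of_real_eq_1_iff of_real_mult)+
qed

lemma y21_0: assumes t: "t \<in> I" shows "y21 t = 0"
proof -
  have "y11 t * (W2 t * y12 t - E1 t * y21 t) + (W2 t * y12 t - E1 t * y21 t) * y11 t = 0"
    by (rule deriv_const_on[OF openI t y_diag(2) has_vector_derivative_mult[OF yd(1)[OF t] yd(1)[OF t]]])
  then have "2 * y11 t * (E1 t * y21 t) = 0" using y12_0[OF t] by (simp add: algebra_simps)
  moreover have "y11 t \<noteq> 0" using y_diag(2)[OF t] by auto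
  moreover have "E1 t \<noteq> 0" using w_nz(1)[OF t] eps(1) by (auto simp: E1_def)
  ultimately show ?thesis by simp
qed

lemma H_eq: assumes t: "t \<in> I" shows "H t = mat2 (y11 t * G t$1$1) (y11 t * G t$1$2) (y11 t * G t$2$1) (y11 t * G t$2$2)"
proof -
  have "H t = mat2 (p t) (q t) (r t) (s t)" unfolding p_def q_def r_def s_def by (rule mat2_eta)
  also have "\<dots> = mat2 (y11 t * a t) (y11 t * b t) (y11 t * c t) (y11 t * d t)"
    using cramer[OF t] y12_0[OF t] y21_0[OF t] y_diag(1)[OF t] by simp
  finally show ?thesis unfolding a_def b_def c_def d_def .
qed

lemma unique: "(\<forall>t\<in>I. H t = G t) \<or> (\<forall>t\<in>I. H t = - G t)"
proof -
  have "\<And>t. t \<in> I \<Longrightarrow> (y11 has_vector_derivative 0) (at t within I)"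
    using yd(1) y12_0 y21_0 by (metis has_vector_derivative_at_within mult_zero_right diff_zero)
  then obtain c0 where c0: "\<And>t. t \<in> I \<Longrightarrow> y11 t = c0"
    using has_vector_derivative_zero_constant[OF convexI] by metis
  show ?thesis
  proof (cases "I = {}")
    case True then show ?thesis by simp
  next
    case False
    then obtain t0 where t0: "t0 \<in> I" by blast
    have "c0 * c0 = 1" using y_diag(2)[OF t0] c0[OF t0] by simp
    then have "c0 = 1 \<or> c0 = -1" by (metis square_eq_1_iff power2_eq_square)
    then show ?thesis
    proof
      assume "c0 = 1" then show ?thesis using H_eq c0 by (auto simp flip: mat2_eta)
    next
      assume "c0 = -1"
      then have "H t = - G t" if "t \<in> I" for t
        using H_eq[OF that] c0[OF that] by (simp add: cmat2_eq_iff)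
      then show ?thesis by blast
    qed
  qed
qed

end

theorem proposition2p1:
  fixes I :: "real set" and \<gamma> :: "real \<Rightarrow> complex^2^2"
  assumes "open_interval I"
    and "null_curve_no_flex I \<gamma>"
  shows "(\<exists>\<Gamma> \<epsilon> w k. canonical_frame_data I \<gamma> \<Gamma> \<epsilon> w k)
     \<and> (\<forall>\<Gamma> \<Gamma>'. canonical_frame I \<gamma> \<Gamma> \<and> canonical_frame I \<gamma> \<Gamma>' \<longrightarrow>
           (\<forall>t\<in>I. \<Gamma>' t = \<Gamma> t) \<or> (\<forall>t\<in>I. \<Gamma>' t = - \<Gamma> t))"
proof (intro conjI allI impI)
  show "\<exists>\<Gamma> \<epsilon> w k. canonical_frame_data I \<gamma> \<Gamma> \<epsilon> w k"
    by (rule existence_main[OF assms])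
next
  fix \<Gamma> \<Gamma>' assume "canonical_frame I \<gamma> \<Gamma> \<and> canonical_frame I \<gamma> \<Gamma>'"
  then obtain e1 w1 k1 e2 w2 k2 where c1: "canonical_frame_data I \<gamma> \<Gamma> e1 w1 k1"
    and c2: "canonical_frame_data I \<gamma> \<Gamma>' e2 w2 k2"
    unfolding canonical_frame_def by blast
  interpret tf: twof I \<gamma> \<Gamma> \<Gamma>' e1 e2 w1 k1 w2 k2
    by unfold_locales (rule assms(1), rule c1, rule c2)
  show "(\<forall>t\<in>I. \<Gamma>' t = \<Gamma> t) \<or> (\<forall>t\<in>I. \<Gamma>' t = - \<Gamma> t)" by (rule tf.unique)
qed

end
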